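(* Let $\mathcal{S},\mathcal{A}$ be finite and let $\mathcal{M}$ be the class of all transition kernels $\mathcal{S}\times\mathcal{A}\to\Delta(\mathcal{S})$ (so the MLE is the empirical transition distribution). There exist universal constants $c_1,\dots,c_4$ such that, running CPPO with $\xi=c_1\frac{|\mathcal{S}|^2|\mathcal{A}|\ln(n|\mathcal{S}||\mathcal{A}|c_2/\delta)}{n}$, for any $\pi^*\in\Pi$ with $C_{\pi^*,P^\star}<\infty$, with probability at least $1-\delta$, $$V^{\pi^*}_{P^\star}-V^{\hat\pi}_{P^\star}\le c_3H^2\sqrt{\frac{C_{\pi^*,P^\star}|\mathcal{S}|^2|\mathcal{A}|\ln(n|\mathcal{S}||\mathcal{A}|c_4/\delta)}{n}}.$$
   Context: Episodic finite-horizon MDP with horizon $H$, reward $r\in[0,1]$, initial distribution $d_0$, unknown true transition $P^\star$. $V^\pi_P$ is the expected cumulative $H$-step reward of Markov policy $\pi$ under transition $P$; $d^\pi_P=\frac1H\sum_{t=0}^{H-1}d^\pi_{P,t}$ with $d^\pi_{P,t}$ the law of $(s_t,a_t)$. $\Pi$ is the class of all Markov policies. Data $\mathcal{D}=\{(s_i,a_i,s_i')\}_{i=1}^n$ i.i.d., $(s_i,a_i)\sim\rho$, $s_i'\sim P^\star(\cdot|s_i,a_i)$; $\mathbb{E}_{\mathcal{D}}$ is the empirical average. CPPO: $\hat P_{\mathrm{MLE}}=\arg\max_{P\in\mathcal{M}}\mathbb{E}_{\mathcal{D}}[\ln P(s'|s,a)]$, $\mathcal{M}_{\mathcal{D}}=\{P\in\mathcal{M}:\mathbb{E}_{\mathcal{D}}\|P(\cdot|s,a)-\hat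 P_{\mathrm{MLE}}(\cdot|s,a)\|_1^2\le\xi\}$, $\hat\pi=\arg\max_{\pi\in\Pi}\min_{P\in\mathcal{M}_{\mathcal{D}}}V^\pi_P$. Density-ratio concentrability: $C_{\pi^*,P^\star}=\max_{(s,a)}d^{\pi^*}_{P^\star}(s,a)/\rho(s,a)$. *)

theory Defs
  imports "HOL-Probability.Probability"
begin

(* Finite MDP encoded with state set {..<nS} and action set {..<nA} (nat carriers),
   so that the universal constants can be quantified before the sizes. *)

definition is_kernel :: "nat \<Rightarrow> nat \<Rightarrow> (nat \<Rightarrow> nat \<Rightarrow> nat pmf) \<Rightarrow> bool" where
  "is_kernel nS nA P \<longleftrightarrow> (\<forall>s a. s < nS \<longrightarrow> a < nA \<longrightarrow> set_pmf (P s a) \<subseteq> {..<nS})"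

definition is_policy :: "nat \<Rightarrow> nat \<Rightarrow> (nat \<Rightarrow> nat \<Rightarrow> nat pmf) \<Rightarrow> bool" where
  "is_policy nS nA pol \<longleftrightarrow> (\<forall>t s. s < nS \<longrightarrow> set_pmf (pol t s) \<subseteq> {..<nA})"

primrec state_dist :: "nat pmf \<Rightarrow> (nat \<Rightarrow> nat \<Rightarrow> nat pmf) \<Rightarrow> (nat \<Rightarrow> nat \<Rightarrow> nat pmf) \<Rightarrow> nat \<Rightarrow> nat pmf" where
  "state_dist d0 P pol 0 = d0"
| "state_dist d0 P pol (Suc t) =
     bind_pmf (state_dist d0 P pol t) (\<lambda>s. bind_pmf (pol t s) (\<lambda>a. P s a))"

definition sa_dist :: "nat pmf \<Rightarrow> (nat \<Rightarrow> nat \<Rightarrow> nat pmf) \<Rightarrow> (nat \<Rightarrow> nat \<Rightarrow> nat pmf) \<Rightarrow> nat \<Rightarrow> (nat \<times> nat) pmf" where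
  "sa_dist d0 P pol t = bind_pmf (state_dist d0 P pol t) (\<lambda>s. map_pmf (\<lambda>a. (s, a)) (pol t s))"

definition value_fn :: "nat \<Rightarrow> (nat \<Rightarrow> nat \<Rightarrow> real) \<Rightarrow> nat pmf \<Rightarrow> (nat \<Rightarrow> nat \<Rightarrow> nat pmf) \<Rightarrow> (nat \<Rightarrow> nat \<Rightarrow> nat pmf) \<Rightarrow> real" where
  "value_fn H r d0 P pol = (\<Sum>t<H. measure_pmf.expectation (sa_dist d0 P pol t) (\<lambda>(s, a). r s a))"

definition occupancy :: "nat \<Rightarrow> nat pmf \<Rightarrow> (nat \<Rightarrow> nat \<Rightarrow> nat pmf) \<Rightarrow> (nat \<Rightarrow> nat \<Rightarrow> nat pmf) \<Rightarrow> nat \<times> nat \<Rightarrow> real" where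
  "occupancy H d0 P pol sa = (1 / real H) * (\<Sum>t<H. pmf (sa_dist d0 P pol t) sa)"

(* C_{pol,P} = max_{(s,a)} d^pi_P(s,a) / rho(s,a)  (finiteness assumed separately) *)
definition concentrability :: "nat \<Rightarrow> nat \<Rightarrow> nat \<Rightarrow> nat pmf \<Rightarrow> (nat \<Rightarrow> nat \<Rightarrow> nat pmf) \<Rightarrow> (nat \<Rightarrow> nat \<Rightarrow> nat pmf) \<Rightarrow> (nat \<times> nat) pmf \<Rightarrow> real" where
  "concentrability nS nA H d0 P pol rho =
     Max ((\<lambda>sa. occupancy H d0 P pol sa / pmf rho sa) ` ({..<nS} \<times> {..<nA}))"

definition sample_pmf :: "(nat \<times> nat) pmf \<Rightarrow> (nat \<Rightarrow> nat \<Rightarrow> nat pmf) \<Rightarrow> (nat \<times> nat \<times> nat) pmf" where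
  "sample_pmf rho Pstar = bind_pmf rho (\<lambda>(s, a). map_pmf (\<lambda>s'. (s, a, s')) (Pstar s a))"

definition data_pmf :: "nat \<Rightarrow> (nat \<times> nat) pmf \<Rightarrow> (nat \<Rightarrow> nat \<Rightarrow> nat pmf) \<Rightarrow> (nat \<Rightarrow> nat \<times> nat \<times> nat) pmf" where
  "data_pmf n rho Pstar = Pi_pmf {..<n} (0, 0, 0) (\<lambda>_. sample_pmf rho Pstar)"

definition emp_avg :: "nat \<Rightarrow> (nat \<Rightarrow> nat \<times> nat \<times> nat) \<Rightarrow> (nat \<times> nat \<times> nat \<Rightarrow> real) \<Rightarrow> real" where
  "emp_avg n D f = (\<Sum>i<n. f (D i)) / real n"

(* MLE over the class M of all kernels: maximiser of the likelihood prod_i P(s'_i|s_i,a_i),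
   equivalently of E_D[ln P(s'|s,a)] (with ln 0 = -infinity) *)
definition is_mle :: "nat \<Rightarrow> nat \<Rightarrow> nat \<Rightarrow> (nat \<Rightarrow> nat \<times> nat \<times> nat) \<Rightarrow> (nat \<Rightarrow> nat \<Rightarrow> nat pmf) \<Rightarrow> bool" where
  "is_mle nS nA n D Phat \<longleftrightarrow> is_kernel nS nA Phat \<and>
     (\<forall>P. is_kernel nS nA P \<longrightarrow>
        (\<Prod>i<n. pmf (P (fst (D i)) (fst (snd (D i)))) (snd (snd (D i))))
        \<le> (\<Prod>i<n. pmf (Phat (fst (D i)) (fst (snd (D i)))) (snd (snd (D i)))))"

definition l1_dist :: "nat \<Rightarrow> nat pmf \<Rightarrow> nat pmf \<Rightarrow> real" where
  "l1_dist nS p q = (\<Sum>s'<nS. \<bar>pmf p s' - pmf q s'\<bar>)"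

definition version_space :: "nat \<Rightarrow> nat \<Rightarrow> nat \<Rightarrow> (nat \<Rightarrow> nat \<times> nat \<times> nat) \<Rightarrow> (nat \<Rightarrow> nat \<Rightarrow> nat pmf) \<Rightarrow> real \<Rightarrow> (nat \<Rightarrow> nat \<Rightarrow> nat pmf) set" where
  "version_space nS nA n D Phat xi =
     {P. is_kernel nS nA P \<and>
         emp_avg n D (\<lambda>(s, a, s'). (l1_dist nS (P s a) (Phat s a))\<^sup>2) \<le> xi}"

definition is_cppo_output :: "nat \<Rightarrow> nat \<Rightarrow> nat \<Rightarrow> (nat \<Rightarrow> nat \<Rightarrow> real) \<Rightarrow> nat pmf \<Rightarrow> nat \<Rightarrow> (nat \<Rightarrow> nat \<times> nat \<times> nat) \<Rightarrow> real \<Rightarrow> (nat \<Rightarrow> nat \<Rightarrow> nat pmf) \<Rightarrow> bool" where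
  "is_cppo_output nS nA H r d0 n D xi polhat \<longleftrightarrow>
     (\<exists>Phat. is_mle nS nA n D Phat \<and> is_policy nS nA polhat \<and>
        (\<forall>pol. is_policy nS nA pol \<longrightarrow>
           (INF P\<in>version_space nS nA n D Phat xi. value_fn H r d0 P pol)
           \<le> (INF P\<in>version_space nS nA n D Phat xi. value_fn H r d0 P polhat)))"

end

theory Submission
  imports Defs "HOL-Analysis.Analysis"
begin

lemma sum_pmf_le_1: "finite A \<Longrightarrow> (\<Sum>x\<in>A. pmf p x) \<le> 1"
  by (metis measure_measure_pmf_finite measure_pmf.subprob_measure_le_1)

lemma set_state_dist:
  assumes d0: "set_pmf d0 \<subseteq> {..<nS}" and P: "is_kernel nS nA P" and pol: "is_policy nS nA pol"
  shows "set_pmf (state_dist d0 P pol t) \<subseteq> {..<nS}"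
proof (induction t)
  case 0 then show ?case using d0 by simp
next
  case (Suc t)
  show ?case
  proof
    fix s' assume "s' \<in> set_pmf (state_dist d0 P pol (Suc t))"
    then obtain s a where s: "s \<in> set_pmf (state_dist d0 P pol t)" and a: "a \<in> set_pmf (pol t s)"
      and s': "s' \<in> set_pmf (P s a)" by auto
    have "s < nS" using s Suc by auto
    moreover have "a < nA" using a pol \<open>s < nS\<close> unfolding is_policy_def by auto
    ultimately show "s' \<in> {..<nS}" using P s' unfolding is_kernel_def by auto
  qed
qed

lemma set_sa_dist:
  assumes d0: "set_pmf d0 \<subseteq> {..<nS}" and P: "is_kernel nS nA P" and pol: "is_policy nS nA pol"
  shows "set_pmf (sa_dist d0 P pol t) \<subseteq> {..<nS} \<times> {..<nA}"
  using set_state_dist[OF assms, of t] pol unfolding sa_dist_def is_policy_def by auto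

lemma pmf_sa_dist: "pmf (sa_dist d0 P pol t) (s, a) = pmf (state_dist d0 P pol t) s * pmf (pol t s) a"
proof -
  have "pmf (sa_dist d0 P pol t) (s, a) =
     (\<integral>x. pmf (map_pmf (\<lambda>a. (x, a)) (pol t x)) (s, a) \<partial>measure_pmf (state_dist d0 P pol t))"
    unfolding sa_dist_def by (simp add: pmf_bind)
  also have "\<dots> = (\<integral>x. indicator {s} x * pmf (pol t s) a \<partial>measure_pmf (state_dist d0 P pol t))"
  proof (rule Bochner_Integration.integral_cong[OF refl])
    fix x
    show "pmf (map_pmf (\<lambda>a. (x, a)) (pol t x)) (s, a) = indicator {s} x * pmf (pol t s) a"
    proof (cases "x = s")
      case True
      then show ?thesis using pmf_map_inj'[of "\<lambda>a. (s, a)" "pol t s" a] by (simp add: inj_on_def)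
    next
      case False
      then have "(s, a) \<notin> set_pmf (map_pmf (\<lambda>a. (x, a)) (pol t x))" by auto
      then show ?thesis using False by (metis indicator_simps(2) mult_eq_0_iff set_pmf_iff singletonD)
    qed
  qed
  also have "\<dots> = pmf (state_dist d0 P pol t) s * pmf (pol t s) a"
    by (simp add: measure_pmf_single)
  finally show ?thesis .
qed

lemma pmf_state_dist_Suc:
  assumes d0: "set_pmf d0 \<subseteq> {..<nS}" and P: "is_kernel nS nA P" and pol: "is_policy nS nA pol"
  shows "pmf (state_dist d0 P pol (Suc t)) s' =
    (\<Sum>s<nS. pmf (state_dist d0 P pol t) s * (\<Sum>a<nA. pmf (pol t s) a * pmf (P s a) s'))"
proof -
  have "pmf (state_dist d0 P pol (Suc t)) s' =
     (\<integral>s. pmf (bind_pmf (pol t s) (\<lambda>a. P s a)) s' \<partial>measure_pmf (state_dist d0 P pol t))"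
    by (simp add: pmf_bind)
  also have "\<dots> = (\<Sum>s\<in>{..<nS}. pmf (bind_pmf (pol t s) (\<lambda>a. P s a)) s' * pmf (state_dist d0 P pol t) s)"
    by (rule integral_measure_pmf_real) (use set_state_dist[OF assms, of t] in auto)
  also have "\<dots> = (\<Sum>s<nS. pmf (state_dist d0 P pol t) s * (\<Sum>a<nA. pmf (pol t s) a * pmf (P s a) s'))"
  proof (rule sum.cong[OF refl])
    fix s assume s: "s \<in> {..<nS}"
    have "pmf (bind_pmf (pol t s) (\<lambda>a. P s a)) s' = (\<integral>a. pmf (P s a) s' \<partial>measure_pmf (pol t s))"
      by (simp add: pmf_bind)
    also have "\<dots> = (\<Sum>a\<in>{..<nA}. pmf (P s a) s' * pmf (pol t s) a)"
      by (rule integral_measure_pmf_real) (use pol s in \<open>auto simp: is_policy_def\<close>)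
    finally show "pmf (bind_pmf (pol t s) (\<lambda>a. P s a)) s' * pmf (state_dist d0 P pol t) s =
        pmf (state_dist d0 P pol t) s * (\<Sum>a<nA. pmf (pol t s) a * pmf (P s a) s')"
      by (simp add: mult.commute)
  qed
  finally show ?thesis .
qed

lemma expect_sa_dist:
  assumes d0: "set_pmf d0 \<subseteq> {..<nS}" and P: "is_kernel nS nA P" and pol: "is_policy nS nA pol"
  shows "measure_pmf.expectation (sa_dist d0 P pol t) (\<lambda>(s, a). f s a) =
    (\<Sum>s<nS. pmf (state_dist d0 P pol t) s * (\<Sum>a<nA. pmf (pol t s) a * f s a))"
proof -
  have "measure_pmf.expectation (sa_dist d0 P pol t) (\<lambda>(s, a). f s a) =
     (\<Sum>x\<in>{..<nS} \<times> {..<nA}. (case x of (s, a) \<Rightarrow> f s a) * pmf (sa_dist d0 P pol t) x)"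
    by (rule integral_measure_pmf_real) (use set_sa_dist[OF assms, of t] in auto)
  also have "\<dots> = (\<Sum>s<nS. \<Sum>a<nA. f s a * pmf (sa_dist d0 P pol t) (s, a))"
    by (simp add: sum.cartesian_product case_prod_beta)
  also have "\<dots> = (\<Sum>s<nS. pmf (state_dist d0 P pol t) s * (\<Sum>a<nA. pmf (pol t s) a * f s a))"
    by (simp add: pmf_sa_dist sum_distrib_left mult_ac)
  finally show ?thesis .
qed

lemma swap_c: "(\<Sum>s'\<in>B. (c::real) * (\<Sum>a\<in>A. f a s')) = c * (\<Sum>a\<in>A. \<Sum>s'\<in>B. f a s')"
  by (subst sum.swap) (simp add: sum_distrib_left)

lemma sim_step:
  assumes d0: "set_pmf d0 \<subseteq> {..<nS}" and P: "is_kernel nS nA P" and Q: "is_kernel nS nA Q"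
    and pol: "is_policy nS nA pol"
  shows "(\<Sum>s'<nS. \<bar>pmf (state_dist d0 Q pol (Suc t)) s' - pmf (state_dist d0 P pol (Suc t)) s'\<bar>)
     \<le> (\<Sum>s<nS. \<Sum>a<nA. pmf (sa_dist d0 Q pol t) (s, a) * l1_dist nS (P s a) (Q s a))
       + (\<Sum>s<nS. \<bar>pmf (state_dist d0 Q pol t) s - pmf (state_dist d0 P pol t) s\<bar>)"
proof -
  let ?dQ = "pmf (state_dist d0 Q pol t)" and ?dP = "pmf (state_dist d0 P pol t)"
  let ?pi = "\<lambda>s. pmf (pol t s)"
  have pt: "\<bar>pmf (state_dist d0 Q pol (Suc t)) s' - pmf (state_dist d0 P pol (Suc t)) s'\<bar>
     \<le> (\<Sum>s<nS. \<Sum>a<nA. ?dQ s * ?pi s a * \<bar>pmf (P s a) s' - pmf (Q s a) s'\<bar>)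
       + (\<Sum>s<nS. \<bar>?dQ s - ?dP s\<bar> * (\<Sum>a<nA. ?pi s a * pmf (P s a) s'))" for s'
  proof -
    have eq: "pmf (state_dist d0 Q pol (Suc t)) s' - pmf (state_dist d0 P pol (Suc t)) s'
      = (\<Sum>s<nS. \<Sum>a<nA. ?dQ s * ?pi s a * (pmf (Q s a) s' - pmf (P s a) s'))
       + (\<Sum>s<nS. (?dQ s - ?dP s) * (\<Sum>a<nA. ?pi s a * pmf (P s a) s'))"
    proof -
      have e1: "(\<Sum>s<nS. \<Sum>a<nA. ?dQ s * ?pi s a * (pmf (Q s a) s' - pmf (P s a) s'))
        = (\<Sum>s<nS. ?dQ s * (\<Sum>a<nA. ?pi s a * pmf (Q s a) s')) - (\<Sum>s<nS. ?dQ s * (\<Sum>a<nA. ?pi s a * pmf (P s a) s'))"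
        by (simp add: sum_distrib_left right_diff_distrib sum_subtractf mult.assoc)
      have e2: "(\<Sum>s<nS. (?dQ s - ?dP s) * (\<Sum>a<nA. ?pi s a * pmf (P s a) s'))
        = (\<Sum>s<nS. ?dQ s * (\<Sum>a<nA. ?pi s a * pmf (P s a) s')) - (\<Sum>s<nS. ?dP s * (\<Sum>a<nA. ?pi s a * pmf (P s a) s'))"
        by (simp add: left_diff_distrib sum_subtractf)
      show ?thesis unfolding e1 e2 pmf_state_dist_Suc[OF d0 Q pol] pmf_state_dist_Suc[OF d0 P pol] by simp
    qed
    have "\<bar>\<Sum>s<nS. \<Sum>a<nA. ?dQ s * ?pi s a * (pmf (Q s a) s' - pmf (P s a) s')\<bar>
        \<le> (\<Sum>s<nS. \<Sum>a<nA. ?dQ s * ?pi s a * \<bar>pmf (P s a) s' - pmf (Q s a) s'\<bar>)"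
    proof -
      have "\<bar>\<Sum>s<nS. \<Sum>a<nA. ?dQ s * ?pi s a * (pmf (Q s a) s' - pmf (P s a) s')\<bar>
          \<le> (\<Sum>s<nS. \<bar>\<Sum>a<nA. ?dQ s * ?pi s a * (pmf (Q s a) s' - pmf (P s a) s')\<bar>)"
        by (rule sum_abs)
      also have "\<dots> \<le> (\<Sum>s<nS. \<Sum>a<nA. \<bar>?dQ s * ?pi s a * (pmf (Q s a) s' - pmf (P s a) s')\<bar>)"
        by (intro sum_mono sum_abs)
      also have "\<dots> = (\<Sum>s<nS. \<Sum>a<nA. ?dQ s * ?pi s a * \<bar>pmf (P s a) s' - pmf (Q s a) s'\<bar>)"
        by (intro sum.cong refl) (simp add: abs_mult abs_minus_commute)
      finally show ?thesis .
    qed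
    moreover have "\<bar>\<Sum>s<nS. (?dQ s - ?dP s) * (\<Sum>a<nA. ?pi s a * pmf (P s a) s')\<bar>
        \<le> (\<Sum>s<nS. \<bar>?dQ s - ?dP s\<bar> * (\<Sum>a<nA. ?pi s a * pmf (P s a) s'))"
    proof -
      have "\<bar>\<Sum>s<nS. (?dQ s - ?dP s) * (\<Sum>a<nA. ?pi s a * pmf (P s a) s')\<bar>
          \<le> (\<Sum>s<nS. \<bar>(?dQ s - ?dP s) * (\<Sum>a<nA. ?pi s a * pmf (P s a) s')\<bar>)"
        by (rule sum_abs)
      also have "\<dots> = (\<Sum>s<nS. \<bar>?dQ s - ?dP s\<bar> * (\<Sum>a<nA. ?pi s a * pmf (P s a) s'))"
        by (intro sum.cong refl) (simp add: abs_mult sum_nonneg)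
      finally show ?thesis .
    qed
    ultimately show ?thesis unfolding eq by (smt (verit) abs_triangle_ineq)
  qed
  have "(\<Sum>s'<nS. \<bar>pmf (state_dist d0 Q pol (Suc t)) s' - pmf (state_dist d0 P pol (Suc t)) s'\<bar>)
     \<le> (\<Sum>s'<nS. (\<Sum>s<nS. \<Sum>a<nA. ?dQ s * ?pi s a * \<bar>pmf (P s a) s' - pmf (Q s a) s'\<bar>)
       + (\<Sum>s<nS. \<bar>?dQ s - ?dP s\<bar> * (\<Sum>a<nA. ?pi s a * pmf (P s a) s')))"
    by (intro sum_mono pt)
  also have "\<dots> = (\<Sum>s<nS. \<Sum>a<nA. ?dQ s * ?pi s a * l1_dist nS (P s a) (Q s a))
     + (\<Sum>s<nS. \<bar>?dQ s - ?dP s\<bar> * (\<Sum>a<nA. ?pi s a * (\<Sum>s'<nS. pmf (P s a) s')))"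
  proof -
    have a1: "(\<Sum>s'<nS. \<Sum>s<nS. \<Sum>a<nA. ?dQ s * ?pi s a * \<bar>pmf (P s a) s' - pmf (Q s a) s'\<bar>)
       = (\<Sum>s<nS. \<Sum>a<nA. ?dQ s * ?pi s a * l1_dist nS (P s a) (Q s a))"
    proof -
      have "(\<Sum>s'<nS. \<Sum>s<nS. \<Sum>a<nA. ?dQ s * ?pi s a * \<bar>pmf (P s a) s' - pmf (Q s a) s'\<bar>)
        = (\<Sum>s<nS. \<Sum>s'<nS. \<Sum>a<nA. ?dQ s * ?pi s a * \<bar>pmf (P s a) s' - pmf (Q s a) s'\<bar>)"
        by (rule sum.swap)
      also have "\<dots> = (\<Sum>s<nS. \<Sum>a<nA. \<Sum>s'<nS. ?dQ s * ?pi s a * \<bar>pmf (P s a) s' - pmf (Q s a) s'\<bar>)"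
        by (rule sum.cong[OF refl], rule sum.swap)
      finally show ?thesis unfolding l1_dist_def by (simp add: sum_distrib_left)
    qed
    have a2: "(\<Sum>s'<nS. \<Sum>s<nS. \<bar>?dQ s - ?dP s\<bar> * (\<Sum>a<nA. ?pi s a * pmf (P s a) s'))
       = (\<Sum>s<nS. \<bar>?dQ s - ?dP s\<bar> * (\<Sum>a<nA. ?pi s a * (\<Sum>s'<nS. pmf (P s a) s')))"
    proof -
      have "(\<Sum>s'<nS. \<Sum>s<nS. \<bar>?dQ s - ?dP s\<bar> * (\<Sum>a<nA. ?pi s a * pmf (P s a) s'))
        = (\<Sum>s<nS. \<Sum>s'<nS. \<bar>?dQ s - ?dP s\<bar> * (\<Sum>a<nA. ?pi s a * pmf (P s a) s'))"
        by (rule sum.swap)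
      also have "\<dots> = (\<Sum>s<nS. \<bar>?dQ s - ?dP s\<bar> * (\<Sum>a<nA. \<Sum>s'<nS. ?pi s a * pmf (P s a) s'))"
        by (rule sum.cong[OF refl]) (rule swap_c)
      also have "\<dots> = (\<Sum>s<nS. \<bar>?dQ s - ?dP s\<bar> * (\<Sum>a<nA. ?pi s a * (\<Sum>s'<nS. pmf (P s a) s')))"
        by (simp add: sum_distrib_left)
      finally show ?thesis .
    qed
    show ?thesis unfolding sum.distrib a1 a2 ..
  qed
  also have "\<dots> \<le> (\<Sum>s<nS. \<Sum>a<nA. ?dQ s * ?pi s a * l1_dist nS (P s a) (Q s a))
     + (\<Sum>s<nS. \<bar>?dQ s - ?dP s\<bar>)"
  proof -
    have "(\<Sum>a<nA. ?pi s a * (\<Sum>s'<nS. pmf (P s a) s')) \<le> 1" for s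
    proof -
      have "(\<Sum>a<nA. ?pi s a * (\<Sum>s'<nS. pmf (P s a) s')) \<le> (\<Sum>a<nA. ?pi s a)"
        by (intro sum_mono) (simp add: mult_left_le sum_pmf_le_1)
      also have "\<dots> \<le> 1" by (rule sum_pmf_le_1) simp
      finally show ?thesis .
    qed
    then have "(\<Sum>s<nS. \<bar>?dQ s - ?dP s\<bar> * (\<Sum>a<nA. ?pi s a * (\<Sum>s'<nS. pmf (P s a) s')))
       \<le> (\<Sum>s<nS. \<bar>?dQ s - ?dP s\<bar>)"
      by (intro sum_mono) (simp add: mult_left_le)
    then show ?thesis by simp
  qed
  finally show ?thesis by (simp add: pmf_sa_dist)
qed

lemma sim_dist:
  assumes d0: "set_pmf d0 \<subseteq> {..<nS}" and P: "is_kernel nS nA P" and Q: "is_kernel nS nA Q"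
    and pol: "is_policy nS nA pol"
  shows "(\<Sum>s<nS. \<bar>pmf (state_dist d0 Q pol t) s - pmf (state_dist d0 P pol t) s\<bar>)
     \<le> (\<Sum>k<t. \<Sum>s<nS. \<Sum>a<nA. pmf (sa_dist d0 Q pol k) (s, a) * l1_dist nS (P s a) (Q s a))"
proof (induction t)
  case 0 then show ?case by simp
next
  case (Suc t)
  then show ?case using sim_step[OF assms, of t] by simp
qed

lemma sim_value_t:
  assumes d0: "set_pmf d0 \<subseteq> {..<nS}" and P: "is_kernel nS nA P" and Q: "is_kernel nS nA Q"
    and pol: "is_policy nS nA pol" and r: "\<forall>s a. s < nS \<longrightarrow> a < nA \<longrightarrow> 0 \<le> r s a \<and> r s a \<le> 1"
  shows "measure_pmf.expectation (sa_dist d0 Q pol t) (\<lambda>(s, a). r s a)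
       - measure_pmf.expectation (sa_dist d0 P pol t) (\<lambda>(s, a). r s a)
     \<le> (\<Sum>s<nS. \<bar>pmf (state_dist d0 Q pol t) s - pmf (state_dist d0 P pol t) s\<bar>)"
proof -
  let ?dQ = "pmf (state_dist d0 Q pol t)" and ?dP = "pmf (state_dist d0 P pol t)"
  have "measure_pmf.expectation (sa_dist d0 Q pol t) (\<lambda>(s, a). r s a)
       - measure_pmf.expectation (sa_dist d0 P pol t) (\<lambda>(s, a). r s a)
     = (\<Sum>s<nS. (?dQ s - ?dP s) * (\<Sum>a<nA. pmf (pol t s) a * r s a))"
    unfolding expect_sa_dist[OF d0 Q pol] expect_sa_dist[OF d0 P pol]
    by (simp add: sum_subtractf left_diff_distrib)
  also have "\<dots> \<le> (\<Sum>s<nS. \<bar>?dQ s - ?dP s\<bar>)"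
  proof (intro sum_mono)
    fix s assume s: "s \<in> {..<nS}"
    have b0: "0 \<le> (\<Sum>a<nA. pmf (pol t s) a * r s a)"
      using r s by (intro sum_nonneg) auto
    have "(\<Sum>a<nA. pmf (pol t s) a * r s a) \<le> (\<Sum>a<nA. pmf (pol t s) a)"
      using r s by (intro sum_mono) (simp add: mult_left_le)
    also have "\<dots> \<le> 1" by (rule sum_pmf_le_1) simp
    finally have b1: "(\<Sum>a<nA. pmf (pol t s) a * r s a) \<le> 1" .
    have "(?dQ s - ?dP s) * (\<Sum>a<nA. pmf (pol t s) a * r s a)
        \<le> \<bar>?dQ s - ?dP s\<bar> * (\<Sum>a<nA. pmf (pol t s) a * r s a)"
      using b0 by (intro mult_right_mono) auto
    also have "\<dots> \<le> \<bar>?dQ s - ?dP s\<bar>" using b1 by (simp add: mult_left_le)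
    finally show "(?dQ s - ?dP s) * (\<Sum>a<nA. pmf (pol t s) a * r s a) \<le> \<bar>?dQ s - ?dP s\<bar>" .
  qed
  finally show ?thesis .
qed

lemma value_nonneg:
  assumes d0: "set_pmf d0 \<subseteq> {..<nS}" and P: "is_kernel nS nA P"
    and pol: "is_policy nS nA pol" and r: "\<forall>s a. s < nS \<longrightarrow> a < nA \<longrightarrow> 0 \<le> r s a \<and> r s a \<le> 1"
  shows "0 \<le> value_fn H r d0 P pol"
  unfolding value_fn_def expect_sa_dist[OF d0 P pol]
  using r by (intro sum_nonneg mult_nonneg_nonneg) auto

lemma simulation:
  assumes d0: "set_pmf d0 \<subseteq> {..<nS}" and P: "is_kernel nS nA P" and Q: "is_kernel nS nA Q"
    and pol: "is_policy nS nA pol" and r: "\<forall>s a. s < nS \<longrightarrow> a < nA \<longrightarrow> 0 \<le> r s a \<and> r s a \<le> 1"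
    and H: "H \<ge> 1"
  shows "value_fn H r d0 Q pol - value_fn H r d0 P pol
     \<le> real H ^ 2 * (\<Sum>s<nS. \<Sum>a<nA. occupancy H d0 Q pol (s, a) * l1_dist nS (P s a) (Q s a))"
proof -
  define g where "g k = (\<Sum>s<nS. \<Sum>a<nA. pmf (sa_dist d0 Q pol k) (s, a) * l1_dist nS (P s a) (Q s a))" for k
  have g0: "0 \<le> g k" for k unfolding g_def l1_dist_def by (intro sum_nonneg mult_nonneg_nonneg) auto
  have "value_fn H r d0 Q pol - value_fn H r d0 P pol
      \<le> (\<Sum>t<H. \<Sum>k<t. g k)"
    unfolding value_fn_def sum_subtractf[symmetric] g_def
    by (intro sum_mono order.trans[OF sim_value_t[OF assms(1-5)] sim_dist[OF assms(1-4)]])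
  also have "\<dots> \<le> (\<Sum>t<H. \<Sum>k<H. g k)"
    by (intro sum_mono sum_mono2) (auto simp: g0)
  also have "\<dots> = real H * (\<Sum>k<H. g k)" by simp
  also have "(\<Sum>k<H. g k) = real H * (\<Sum>s<nS. \<Sum>a<nA. occupancy H d0 Q pol (s, a) * l1_dist nS (P s a) (Q s a))"
  proof -
    have "(\<Sum>k<H. g k) = (\<Sum>s<nS. \<Sum>k<H. \<Sum>a<nA. pmf (sa_dist d0 Q pol k) (s, a) * l1_dist nS (P s a) (Q s a))"
      unfolding g_def by (rule sum.swap)
    also have "\<dots> = (\<Sum>s<nS. \<Sum>a<nA. \<Sum>k<H. pmf (sa_dist d0 Q pol k) (s, a) * l1_dist nS (P s a) (Q s a))"
      by (rule sum.cong[OF refl], rule sum.swap)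
    also have "\<dots> = (\<Sum>s<nS. \<Sum>a<nA. real H * (occupancy H d0 Q pol (s, a) * l1_dist nS (P s a) (Q s a)))"
      using H unfolding occupancy_def by (intro sum.cong refl) (simp add: sum_distrib_right)
    finally show ?thesis by (simp add: sum_distrib_left)
  qed
  finally show ?thesis by (simp add: power2_eq_square mult_ac)
qed

lemma nn_prod_Pi:
  fixes g :: "'a \<Rightarrow> ennreal"
  shows "(\<integral>\<^sup>+D. (\<Prod>i<n. g (D i)) \<partial>Pi_pmf {..<n} dflt (\<lambda>_. q)) = (\<integral>\<^sup>+x. g x \<partial>q) ^ n"
proof (induction n)
  case 0 then show ?case by simp
next
  case (Suc n)
  have "Pi_pmf {..<Suc n} dflt (\<lambda>_. q) = Pi_pmf (insert n {..<n}) dflt (\<lambda>_. q)"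
    by (simp add: lessThan_Suc)
  also have "\<dots> = map_pmf (\<lambda>(y,f). f(n:=y)) (pair_pmf q (Pi_pmf {..<n} dflt (\<lambda>_. q)))"
    by (rule Pi_pmf_insert) auto
  finally have eq: "Pi_pmf {..<Suc n} dflt (\<lambda>_. q) = \<dots>" .
  have pr: "(\<Prod>i<Suc n. g ((f(n:=y)) i)) = g y * (\<Prod>i<n. g (f i))" for f y
    by (simp add: prod.lessThan_Suc mult.commute)
  have "(\<integral>\<^sup>+D. (\<Prod>i<Suc n. g (D i)) \<partial>Pi_pmf {..<Suc n} dflt (\<lambda>_. q))
     = (\<integral>\<^sup>+y. \<integral>\<^sup>+f. g y * (\<Prod>i<n. g (f i)) \<partial>Pi_pmf {..<n} dflt (\<lambda>_. q) \<partial>q)"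
    unfolding eq nn_integral_map_pmf nn_integral_pair_pmf' by (simp add: pr mult.commute)
  also have "\<dots> = (\<integral>\<^sup>+y. g y * (\<integral>\<^sup>+x. g x \<partial>q) ^ n \<partial>q)"
    by (subst nn_integral_cmult) (simp_all add: Suc.IH)
  also have "\<dots> = (\<integral>\<^sup>+x. g x \<partial>q) ^ Suc n"
    by (subst nn_integral_multc) (simp_all add: mult.commute)
  finally show ?case .
qed

lemma markov_pmf:
  fixes h :: "'a \<Rightarrow> real" and M :: "'a pmf"
  assumes h0: "\<And>x. 0 \<le> h x" and hB: "(\<integral>\<^sup>+x. ennreal (h x) \<partial>M) \<le> ennreal B" and B: "0 \<le> B" and a: "a > 0"
  shows "measure_pmf.prob M {x. a \<le> h x} \<le> B / a"
proof -
  let ?S = "{x. a \<le> h x}"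
  have "ennreal a * emeasure M ?S = (\<integral>\<^sup>+x. ennreal a * indicator ?S x \<partial>M)"
    by (simp add: nn_integral_cmult_indicator)
  also have "\<dots> \<le> (\<integral>\<^sup>+x. ennreal (h x) \<partial>M)"
    by (intro nn_integral_mono) (auto simp: indicator_def ennreal_leI)
  also have "\<dots> \<le> ennreal B" by (rule hB)
  finally have "ennreal (a * measure_pmf.prob M ?S) \<le> ennreal B"
    using a by (simp add: measure_pmf.emeasure_eq_measure ennreal_mult)
  then have "a * measure_pmf.prob M ?S \<le> B" using B by (simp add: ennreal_le_iff)
  then show ?thesis using a by (simp add: field_simps)
qed

lemma markov_prod:
  fixes f :: "'a \<Rightarrow> real" and q :: "'a pmf"
  assumes f0: "\<And>x. 0 \<le> f x" and fM: "(\<integral>\<^sup>+x. ennreal (f x) \<partial>q) \<le> ennreal M" and M: "0 \<le> M" and a: "a > 0"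
  shows "measure_pmf.prob (Pi_pmf {..<n} dflt (\<lambda>_. q)) {D. a \<le> (\<Prod>i<n. f (D i))} \<le> M ^ n / a"
proof (rule markov_pmf)
  show "0 \<le> (\<Prod>i<n. f (D i))" for D using f0 by (simp add: prod_nonneg)
  have "(\<integral>\<^sup>+D. ennreal (\<Prod>i<n. f (D i)) \<partial>Pi_pmf {..<n} dflt (\<lambda>_. q))
      = (\<integral>\<^sup>+D. (\<Prod>i<n. ennreal (f (D i))) \<partial>Pi_pmf {..<n} dflt (\<lambda>_. q))"
    using f0 by (simp add: prod_ennreal)
  also have "\<dots> = (\<integral>\<^sup>+x. ennreal (f x) \<partial>q) ^ n" by (rule nn_prod_Pi)
  also have "\<dots> \<le> ennreal M ^ n" by (intro power_mono fM) simp
  also have "\<dots> = ennreal (M ^ n)" using M by (simp add: ennreal_power)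
  finally show "(\<integral>\<^sup>+D. ennreal (\<Prod>i<n. f (D i)) \<partial>Pi_pmf {..<n} dflt (\<lambda>_. q)) \<le> ennreal (M ^ n)" .
qed (use M a in auto)

lemma nn_sample:
  "(\<integral>\<^sup>+x. g x \<partial>sample_pmf rho Pstar) =
   (\<integral>\<^sup>+sa. (\<integral>\<^sup>+s'. g (fst sa, snd sa, s') \<partial>Pstar (fst sa) (snd sa)) \<partial>rho)"
  unfolding sample_pmf_def by (simp add: case_prod_beta)

definition hit :: "nat \<Rightarrow> nat \<Rightarrow> nat \<times> nat \<times> nat \<Rightarrow> bool" where
  "hit s0 a0 x \<longleftrightarrow> fst x = s0 \<and> fst (snd x) = a0"

definition cnt :: "nat \<Rightarrow> (nat \<Rightarrow> nat \<times> nat \<times> nat) \<Rightarrow> nat \<Rightarrow> nat \<Rightarrow> nat" where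
  "cnt n D s0 a0 = card {i\<in>{..<n}. hit s0 a0 (D i)}"

lemma cnt_sum: "real (cnt n D s0 a0) = (\<Sum>i<n. if hit s0 a0 (D i) then 1 else 0)"
  unfolding cnt_def by (simp add: sum.inter_filter[symmetric])

lemma ln2_le: "ln (2::real) \<le> 4/5"
proof -
  have "(6/5::real) ^ 4 \<le> exp (1/5) ^ 4"
    by (intro power_mono) (use exp_ge_add_one_self[of "1/5::real"] in auto)
  also have "exp (1/5::real) ^ 4 = exp (4/5)" by (simp flip: exp_of_nat_mult)
  moreover have "(2::real) \<le> (6/5) ^ 4" by (simp add: power_divide)
  ultimately have "2 \<le> exp (4/5::real)" by linarith
  then have "ln 2 \<le> ln (exp (4/5::real))" by (subst ln_le_cancel_iff) auto
  then show ?thesis by simp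
qed

lemma count_low:
  "measure_pmf.prob (data_pmf n rho Pstar)
     {D. real (cnt n D s0 a0) < real n * pmf rho (s0, a0) / 2}
   \<le> exp (- (real n * pmf rho (s0, a0)) / 10)"
proof -
  define \<rho> where "\<rho> = pmf rho (s0, a0)"
  define f where "f x = exp (- ln 2 * (if hit s0 a0 x then 1 else 0::real))" for x
  have f0: "0 \<le> f x" for x unfolding f_def by simp
  have intf: "(\<integral>\<^sup>+x. ennreal (f x) \<partial>sample_pmf rho Pstar) \<le> ennreal (exp (- \<rho> / 2))"
  proof -
    have "(\<integral>\<^sup>+x. ennreal (f x) \<partial>sample_pmf rho Pstar)
       = (\<integral>\<^sup>+sa. ennreal (1 - 1/2 * indicator {(s0, a0)} sa) \<partial>rho)"
      unfolding nn_sample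
      by (intro nn_integral_cong) (auto simp: f_def hit_def indicator_def exp_minus)
    also have "\<dots> = ennreal (\<integral>sa. 1 - 1/2 * indicator {(s0, a0)} sa \<partial>rho)"
      by (intro nn_integral_eq_integral measure_pmf.integrable_const_bound[where B=1])
         (auto simp: indicator_def)
    also have "(\<integral>sa. 1 - 1/2 * indicator {(s0, a0)} sa \<partial>rho) = 1 - \<rho> / 2"
    proof -
      have i1: "measure_pmf.prob rho {(s0, a0)} = \<rho>"
        by (simp add: \<rho>_def measure_pmf_single)
      have int: "integrable (measure_pmf rho) (\<lambda>sa. 1/2 * indicator {(s0, a0)} sa :: real)"
        by (intro measure_pmf.integrable_const_bound[where B=1]) (auto simp: indicator_def)
      show ?thesis
        by (subst Bochner_Integration.integral_diff[OF _ int]) (auto simp: i1)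
    qed
    also have "1 - \<rho> / 2 \<le> exp (- \<rho> / 2)" using exp_ge_add_one_self[of "- \<rho> / 2"] by simp
    finally show ?thesis by (simp add: ennreal_leI)
  qed
  define a where "a = exp (- ln 2 * (real n * \<rho> / 2))"
  have sub: "{D. real (cnt n D s0 a0) < real n * \<rho> / 2} \<subseteq> {D. a \<le> (\<Prod>i<n. f (D i))}"
  proof safe
    fix D assume D: "real (cnt n D s0 a0) < real n * \<rho> / 2"
    have "(\<Prod>i<n. f (D i)) = exp (- ln 2 * real (cnt n D s0 a0))"
      unfolding f_def cnt_sum by (simp add: exp_sum sum_distrib_left)
    moreover have "a \<le> exp (- ln 2 * real (cnt n D s0 a0))"
      unfolding a_def using D by simp
    ultimately show "a \<le> (\<Prod>i<n. f (D i))" by simp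
  qed
  have "measure_pmf.prob (data_pmf n rho Pstar) {D. real (cnt n D s0 a0) < real n * \<rho> / 2}
      \<le> measure_pmf.prob (data_pmf n rho Pstar) {D. a \<le> (\<Prod>i<n. f (D i))}"
    by (rule measure_pmf.finite_measure_mono[OF sub]) simp
  also have "\<dots> \<le> exp (- \<rho> / 2) ^ n / a"
    unfolding data_pmf_def by (rule markov_prod[OF f0 intf]) (auto simp: a_def)
  also have "exp (- \<rho> / 2) ^ n / a = exp (real n * (- \<rho> / 2) - (- ln 2 * (real n * \<rho> / 2)))"
    unfolding a_def exp_diff exp_of_nat_mult ..
  also have "\<dots> \<le> exp (- (real n * \<rho>) / 10)"
  proof -
    have x0: "0 \<le> real n * \<rho>" by (simp add: \<rho>_def)
    have "(real n * \<rho>) * (1/10) \<le> (real n * \<rho>) * ((1 - ln 2) / 2)"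
      by (rule mult_left_mono[OF _ x0]) (use ln2_le in simp)
    then have "real n * (- \<rho> / 2) - (- ln 2 * (real n * \<rho> / 2)) \<le> - (real n * \<rho>) / 10"
      by (simp add: algebra_simps)
    then show ?thesis by simp
  qed
  finally show ?thesis by (simp add: \<rho>_def)
qed

definition zf :: "nat \<Rightarrow> nat \<Rightarrow> nat set \<Rightarrow> real \<Rightarrow> real \<Rightarrow> nat \<times> nat \<times> nat \<Rightarrow> real" where
  "zf s0 a0 A p lam x = (if hit s0 a0 x then lam * (indicator A (snd (snd x)) - p) - lam\<^sup>2 / 8 else 0)"

lemma dev_high:
  assumes lam: "lam > 0"
  shows "measure_pmf.prob (data_pmf n rho Pstar)
     {D. c \<le> (\<Sum>i<n. zf s0 a0 A (measure_pmf.prob (Pstar s0 a0) A) lam (D i))} \<le> exp (- c)"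
proof -
  define p where "p = measure_pmf.prob (Pstar s0 a0) A"
  define f where "f x = exp (zf s0 a0 A p lam x)" for x
  have f0: "0 \<le> f x" for x unfolding f_def by simp
  have inner: "(\<integral>\<^sup>+s'. ennreal (f (s, a, s')) \<partial>Pstar s a) \<le> 1" for s a
  proof (cases "s = s0 \<and> a = a0")
    case True
    interpret I: interval_bounded_random_variable "measure_pmf (Pstar s0 a0)" "\<lambda>s'. indicator A s'" 0 1
      by unfold_locales (auto simp: indicator_def)
    have E: "measure_pmf.expectation (Pstar s0 a0) (\<lambda>s'. indicator A s') = p"
      by (simp add: p_def)
    have "(\<integral>\<^sup>+s'. ennreal (f (s, a, s')) \<partial>Pstar s a)
       = (\<integral>\<^sup>+s'. ennreal (exp (- lam\<^sup>2 / 8)) * ennreal (exp (lam * (indicator A s' - p))) \<partial>Pstar s0 a0)"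
    proof -
      have "exp (zf s0 a0 A p lam (s0, a0, s')) = exp (- lam\<^sup>2 / 8) * exp (lam * (indicator A s' - p))" for s'
        by (simp add: zf_def hit_def exp_add[symmetric])
      then show ?thesis using True by (simp add: f_def ennreal_mult)
    qed
    also have "\<dots> = ennreal (exp (- lam\<^sup>2 / 8)) * (\<integral>\<^sup>+s'. ennreal (exp (lam * (indicator A s' - p))) \<partial>Pstar s0 a0)"
      by (rule nn_integral_cmult) simp
    also have "\<dots> \<le> ennreal (exp (- lam\<^sup>2 / 8)) * ennreal (exp (lam\<^sup>2 * (1 - 0)\<^sup>2 / 8))"
      using I.Hoeffdings_lemma_nn_integral[OF lam] unfolding E by (intro mult_left_mono) auto
    also have "\<dots> = 1" by (simp flip: ennreal_mult exp_add)
    finally show ?thesis .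
  next
    case False
    then have "(\<integral>\<^sup>+s'. ennreal (f (s, a, s')) \<partial>Pstar s a) = (\<integral>\<^sup>+s'. 1 \<partial>Pstar s a)"
      by (intro nn_integral_cong) (auto simp: f_def zf_def hit_def)
    then show ?thesis by simp
  qed
  have intf: "(\<integral>\<^sup>+x. ennreal (f x) \<partial>sample_pmf rho Pstar) \<le> ennreal 1"
  proof -
    have "(\<integral>\<^sup>+x. ennreal (f x) \<partial>sample_pmf rho Pstar) \<le> (\<integral>\<^sup>+sa. 1 \<partial>rho)"
      unfolding nn_sample by (intro nn_integral_mono) (use inner in auto)
    then show ?thesis by simp
  qed
  have sub: "{D. c \<le> (\<Sum>i<n. zf s0 a0 A p lam (D i))} \<subseteq> {D. exp c \<le> (\<Prod>i<n. f (D i))}"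
    by (auto simp: f_def exp_sum[symmetric])
  have "measure_pmf.prob (data_pmf n rho Pstar) {D. c \<le> (\<Sum>i<n. zf s0 a0 A p lam (D i))}
      \<le> measure_pmf.prob (data_pmf n rho Pstar) {D. exp c \<le> (\<Prod>i<n. f (D i))}"
    by (rule measure_pmf.finite_measure_mono[OF sub]) simp
  also have "\<dots> \<le> 1 ^ n / exp c"
    unfolding data_pmf_def by (rule markov_prod[OF f0 intf]) auto
  finally show ?thesis by (simp add: p_def exp_minus field_simps)
qed

lemma data_support:
  assumes "D \<in> set_pmf (data_pmf n rho Pstar)" "i < n"
  shows "D i \<in> set_pmf (sample_pmf rho Pstar)"
  using assms unfolding data_pmf_def by (auto simp: set_Pi_pmf PiE_dflt_def)

lemma sample_support:
  assumes "x \<in> set_pmf (sample_pmf rho Pstar)" "set_pmf rho \<subseteq> {..<nS} \<times> {..<nA}" "is_kernel nS nA Pstar"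
  shows "fst x < nS \<and> fst (snd x) < nA \<and> snd (snd x) < nS"
proof -
  from assms(1) obtain a b s' where ab: "(a, b) \<in> set_pmf rho" and s': "s' \<in> set_pmf (Pstar a b)" and x: "x = (a, b, s')"
    unfolding sample_pmf_def by auto
  have "a < nS" "b < nA" using ab assms(2) by auto
  moreover have "s' < nS" using s' assms(3) \<open>a < nS\<close> \<open>b < nA\<close> unfolding is_kernel_def by auto
  ultimately show ?thesis using x by simp
qed

lemma regroup:
  fixes h :: "'b \<Rightarrow> real"
  assumes "finite I" "finite B" "g ` I \<subseteq> B"
  shows "(\<Sum>i\<in>I. h (g i)) = (\<Sum>b\<in>B. real (card {i\<in>I. g i = b}) * h b)"
proof -
  have "(\<Sum>i\<in>I. h (g i)) = (\<Sum>i\<in>I. \<Sum>b\<in>B. if g i = b then h b else 0)"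
    using assms by (intro sum.cong refl) (auto simp: sum.delta)
  also have "\<dots> = (\<Sum>b\<in>B. \<Sum>i\<in>I. if g i = b then h b else 0)" by (rule sum.swap)
  also have "\<dots> = (\<Sum>b\<in>B. real (card {i\<in>I. g i = b}) * h b)"
    using assms by (intro sum.cong refl) (simp add: sum.If_cases Int_def conj_commute)
  finally show ?thesis .
qed

lemma gibbs:
  fixes y :: "'i \<Rightarrow> nat" and p :: "nat pmf"
  assumes I: "finite I" "I \<noteq> {}" and y: "y ` I \<subseteq> {..<nS}" and p: "set_pmf p \<subseteq> {..<nS}"
  defines "q \<equiv> \<lambda>s'. real (card {i\<in>I. y i = s'}) / real (card I)"
  assumes le: "(\<Prod>i\<in>I. q (y i)) \<le> (\<Prod>i\<in>I. pmf p (y i))"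
  shows "pmf p s' = q s'"
proof -
  define m where "m = real (card I)"
  have m0: "m > 0" using I by (simp add: m_def card_gt_0_iff)
  have qpos: "q (y i) > 0" if "i \<in> I" for i
  proof -
    have "i \<in> {j\<in>I. y j = y i}" using that by simp
    then have "card {j\<in>I. y j = y i} > 0" using I by (auto simp: card_gt_0_iff)
    then show ?thesis using m0 by (simp add: q_def m_def)
  qed
  have "(\<Prod>i\<in>I. q (y i)) > 0" by (rule prod_pos) (use qpos in auto)
  then have "(\<Prod>i\<in>I. pmf p (y i)) > 0" using le by linarith
  have ppos: "pmf p (y i) > 0" if "i \<in> I" for i
  proof -
    have "pmf p (y i) \<noteq> 0"
    proof
      assume "pmf p (y i) = 0"
      then have "(\<Prod>i\<in>I. pmf p (y i)) = 0" using that I(1) by (intro prod_zero) auto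
      then show False using \<open>(\<Prod>i\<in>I. pmf p (y i)) > 0\<close> by simp
    qed
    then show ?thesis using pmf_nonneg[of p "y i"] by linarith
  qed
  define x where "x i = pmf p (y i) / q (y i)" for i
  have xpos: "x i > 0" if "i \<in> I" for i using ppos qpos that by (simp add: x_def)
  have "(\<Sum>i\<in>I. ln (q (y i))) \<le> (\<Sum>i\<in>I. ln (pmf p (y i)))"
  proof -
    have "ln (\<Prod>i\<in>I. q (y i)) \<le> ln (\<Prod>i\<in>I. pmf p (y i))"
      using le qpos ppos by (subst ln_le_cancel_iff) (auto intro!: prod_pos)
    then show ?thesis using I qpos ppos by (simp add: ln_prod less_imp_neq[symmetric])
  qed
  moreover have "(\<Sum>i\<in>I. ln (x i)) = (\<Sum>i\<in>I. ln (pmf p (y i))) - (\<Sum>i\<in>I. ln (q (y i)))"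
    unfolding sum_subtractf[symmetric]
  proof (intro sum.cong refl)
    fix i assume i: "i \<in> I"
    show "ln (x i) = ln (pmf p (y i)) - ln (q (y i))"
      using ppos[OF i] qpos[OF i] by (simp add: x_def ln_div)
  qed
  ultimately have lnx: "0 \<le> (\<Sum>i\<in>I. ln (x i))" by simp
  have Y: "y ` I \<subseteq> y ` I" by simp
  have sumx: "(\<Sum>i\<in>I. x i) = m * (\<Sum>s'\<in>y ` I. pmf p s')"
  proof -
    have "(\<Sum>i\<in>I. x i) = (\<Sum>s'\<in>y ` I. real (card {i\<in>I. y i = s'}) * (pmf p s' / q s'))"
      unfolding x_def using regroup[OF I(1) _ Y, of "\<lambda>s'. pmf p s' / q s'"] I by simp
    also have "\<dots> = (\<Sum>s'\<in>y ` I. m * pmf p s')"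
    proof (rule sum.cong[OF refl])
      fix s' assume "s' \<in> y ` I"
      then obtain i where "i \<in> I" "s' = y i" by auto
      then have "i \<in> {j\<in>I. y j = s'}" by simp
      then have "card {i\<in>I. y i = s'} > 0" using I by (auto simp: card_gt_0_iff)
      then show "real (card {i\<in>I. y i = s'}) * (pmf p s' / q s') = m * pmf p s'"
        by (simp add: q_def m_def field_simps)
    qed
    finally show ?thesis by (simp add: sum_distrib_left)
  qed
  have sump: "(\<Sum>s'\<in>y ` I. pmf p s') \<le> 1" by (rule sum_pmf_le_1) (use I in simp)
  have sumx_le: "(\<Sum>i\<in>I. x i - 1) \<le> 0"
    using sumx sump m0 by (simp add: sum_subtractf m_def[symmetric] mult_left_le)
  have terms: "\<forall>i\<in>I. ln (x i) = x i - 1"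
  proof -
    have nn': "0 \<le> (x i - 1) - ln (x i)" if "i \<in> I" for i using ln_le_minus_one[OF xpos[OF that]] by simp
    then have nn: "\<forall>i\<in>I. 0 \<le> (x i - 1) - ln (x i)" by blast
    have "(\<Sum>i\<in>I. (x i - 1) - ln (x i)) \<le> 0" using lnx sumx_le by (simp add: sum_subtractf)
    moreover have "0 \<le> (\<Sum>i\<in>I. (x i - 1) - ln (x i))" by (rule sum_nonneg) (use nn in auto)
    ultimately have "(\<Sum>i\<in>I. (x i - 1) - ln (x i)) = 0" by linarith
    then have "\<forall>i\<in>I. (x i - 1) - ln (x i) = 0" using sum_nonneg_eq_0_iff[OF I(1) nn'] by simp
    then show ?thesis by simp
  qed
  have peq: "pmf p (y i) = q (y i)" if "i \<in> I" for i
  proof -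
    have "x i = 1" using ln_eq_minus_one[OF xpos[OF that]] terms that by simp
    then show ?thesis using qpos[OF that] by (simp add: x_def)
  qed
  have sumq: "(\<Sum>s'\<in>y ` I. q s') = 1"
  proof -
    have "(\<Sum>s'\<in>y ` I. q s') = (\<Sum>s'\<in>y ` I. real (card {i\<in>I. y i = s'}) * (1 / m))"
      by (simp add: q_def m_def)
    also have "\<dots> = (\<Sum>i\<in>I. 1 / m)" using regroup[OF I(1) _ Y, of "\<lambda>_. 1 / m"] I by simp
    also have "\<dots> = 1" using m0 by (simp add: m_def)
    finally show ?thesis .
  qed
  have sumpY: "(\<Sum>s'\<in>y ` I. pmf p s') = 1"
  proof -
    have "(\<Sum>s'\<in>y ` I. pmf p s') = (\<Sum>s'\<in>y ` I. q s')" by (rule sum.cong) (auto simp: peq)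
    then show ?thesis using sumq by simp
  qed
  show ?thesis
  proof (cases "s' \<in> y ` I")
    case True then show ?thesis using peq by auto
  next
    case False
    then have "{i \<in> I. y i = s'} = {}" by auto
    then have "card {i \<in> I. y i = s'} = 0" by (simp only: card.empty)
    then have q0: "q s' = 0" by (simp add: q_def)
    have "(\<Sum>s'\<in>insert s' (y ` I). pmf p s') \<le> 1" by (rule sum_pmf_le_1) (use I in simp)
    then have "pmf p s' \<le> 0" using False sumpY I by simp
    then show ?thesis using q0 pmf_nonneg[of p s'] by simp
  qed
qed

definition visits :: "nat \<Rightarrow> (nat \<Rightarrow> nat \<times> nat \<times> nat) \<Rightarrow> nat \<Rightarrow> nat \<Rightarrow> nat set" where
  "visits n D s a = {i\<in>{..<n}. hit s a (D i)}"

definition emp :: "nat \<Rightarrow> (nat \<Rightarrow> nat \<times> nat \<times> nat) \<Rightarrow> nat \<Rightarrow> nat \<Rightarrow> nat pmf" where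
  "emp n D s a = (if cnt n D s a > 0 then map_pmf (\<lambda>i. snd (snd (D i))) (pmf_of_set (visits n D s a))
                  else return_pmf 0)"

definition valid :: "nat \<Rightarrow> nat \<Rightarrow> nat \<Rightarrow> (nat \<Rightarrow> nat \<times> nat \<times> nat) \<Rightarrow> bool" where
  "valid nS nA n D \<longleftrightarrow> (\<forall>i<n. fst (D i) < nS \<and> fst (snd (D i)) < nA \<and> snd (snd (D i)) < nS)"

definition lik :: "nat \<Rightarrow> (nat \<Rightarrow> nat \<times> nat \<times> nat) \<Rightarrow> (nat \<Rightarrow> nat \<Rightarrow> nat pmf) \<Rightarrow> real" where
  "lik n D P = (\<Prod>i<n. pmf (P (fst (D i)) (fst (snd (D i)))) (snd (snd (D i))))"

lemma cnt_visits: "cnt n D s a = card (visits n D s a)"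
  by (simp add: cnt_def visits_def)

lemma visits_ne: "cnt n D s a > 0 \<Longrightarrow> visits n D s a \<noteq> {} \<and> finite (visits n D s a)"
proof -
  assume c: "cnt n D s a > 0"
  have f: "finite (visits n D s a)" by (simp add: visits_def)
  have "visits n D s a \<noteq> {}"
  proof
    assume "visits n D s a = {}"
    then have "cnt n D s a = 0" by (simp add: cnt_visits)
    then show False using c by simp
  qed
  then show ?thesis using f by simp
qed

lemma pmf_emp:
  assumes "cnt n D s a > 0"
  shows "pmf (emp n D s a) s' = real (card {i\<in>visits n D s a. snd (snd (D i)) = s'}) / real (cnt n D s a)"
proof -
  have ne: "visits n D s a \<noteq> {}" "finite (visits n D s a)" using visits_ne[OF assms] by auto
  have "pmf (emp n D s a) s' = measure_pmf.prob (pmf_of_set (visits n D s a)) ((\<lambda>i. snd (snd (D i))) -` {s'})"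
    using assms by (simp add: emp_def pmf_map)
  also have "\<dots> = real (card (visits n D s a \<inter> (\<lambda>i. snd (snd (D i))) -` {s'})) / real (card (visits n D s a))"
    by (rule measure_pmf_of_set[OF ne])
  also have "visits n D s a \<inter> (\<lambda>i. snd (snd (D i))) -` {s'} = {i\<in>visits n D s a. snd (snd (D i)) = s'}" by auto
  finally show ?thesis by (simp add: cnt_visits)
qed

lemma emp_kernel:
  assumes "valid nS nA n D" "nS \<ge> 1"
  shows "is_kernel nS nA (emp n D)"
  unfolding is_kernel_def
proof (intro allI impI)
  fix s a assume "s < nS" "a < nA"
  show "set_pmf (emp n D s a) \<subseteq> {..<nS}"
  proof (cases "cnt n D s a > 0")
    case True
    then show ?thesis using visits_ne[OF True] assms(1)
      by (auto simp: emp_def valid_def visits_def)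
  next
    case False then show ?thesis using assms(2) by (auto simp: emp_def)
  qed
qed

lemma emp_factor_pos:
  assumes "i < n"
  shows "pmf (emp n D (fst (D i)) (fst (snd (D i)))) (snd (snd (D i))) > 0"
proof -
  let ?s = "fst (D i)" and ?a = "fst (snd (D i))"
  have iv: "i \<in> visits n D ?s ?a" using assms by (simp add: visits_def hit_def)
  have fin: "finite (visits n D ?s ?a)" by (simp add: visits_def)
  then have c: "cnt n D ?s ?a > 0" using iv by (auto simp: cnt_visits card_gt_0_iff)
  have "i \<in> {j\<in>visits n D ?s ?a. snd (snd (D j)) = snd (snd (D i))}" using iv by simp
  then have "card {j\<in>visits n D ?s ?a. snd (snd (D j)) = snd (snd (D i))} > 0" using fin
    by (auto simp: card_gt_0_iff)
  then show ?thesis using c by (simp add: pmf_emp)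
qed

lemma lik_emp_pos: "lik n D (emp n D) > 0"
  unfolding lik_def by (rule prod_pos) (use emp_factor_pos in auto)

lemma mle_emp:
  assumes mle: "is_mle nS nA n D Phat" and v: "valid nS nA n D" and nS: "nS \<ge> 1"
    and c: "cnt n D s0 a0 > 0"
  shows "pmf (Phat s0 a0) s' = pmf (emp n D s0 a0) s'"
proof -
  let ?V = "visits n D s0 a0"
  have Vne: "?V \<noteq> {}" "finite ?V" using visits_ne[OF c] by auto
  then obtain i0 where i0: "i0 \<in> ?V" by auto
  then have s0: "s0 < nS" and a0: "a0 < nA" using v by (auto simp: visits_def valid_def hit_def)
  have Pk: "is_kernel nS nA Phat" using mle by (simp add: is_mle_def)
  have Ek: "is_kernel nS nA (emp n D)" by (rule emp_kernel[OF v nS])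
  define E where "E s a = (if s = s0 \<and> a = a0 then emp n D s a else Phat s a)" for s a
  have EK: "is_kernel nS nA E" using Pk Ek by (auto simp: is_kernel_def E_def)
  define fP where "fP i = pmf (Phat (fst (D i)) (fst (snd (D i)))) (snd (snd (D i)))" for i
  define fE where "fE i = pmf (E (fst (D i)) (fst (snd (D i)))) (snd (snd (D i)))" for i
  have likP: "lik n D (emp n D) \<le> lik n D Phat" using mle Ek unfolding is_mle_def lik_def by blast
  have likE: "lik n D E \<le> lik n D Phat" using mle EK unfolding is_mle_def lik_def by blast
  have Ppos: "(\<Prod>i<n. fP i) > 0" using likP lik_emp_pos[of n D] unfolding lik_def fP_def by linarith
  have fPpos: "fP i > 0" if "i < n" for i
  proof -
    have "fP i \<noteq> 0"
    proof
      assume "fP i = 0"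
      then have "(\<Prod>i<n. fP i) = 0" using that by (intro prod_zero) auto
      then show False using Ppos by linarith
    qed
    then show ?thesis using pmf_nonneg unfolding fP_def by (simp add: order_less_le)
  qed
  have sub: "?V \<subseteq> {..<n}" by (auto simp: visits_def)
  have splitP: "(\<Prod>i<n. fP i) = (\<Prod>i\<in>{..<n} - ?V. fP i) * (\<Prod>i\<in>?V. fP i)"
    by (rule prod.subset_diff[OF sub]) simp
  have splitE: "(\<Prod>i<n. fE i) = (\<Prod>i\<in>{..<n} - ?V. fE i) * (\<Prod>i\<in>?V. fE i)"
    by (rule prod.subset_diff[OF sub]) simp
  have rest: "(\<Prod>i\<in>{..<n} - ?V. fE i) = (\<Prod>i\<in>{..<n} - ?V. fP i)"
    by (rule prod.cong) (auto simp: fE_def fP_def E_def visits_def hit_def)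
  have Rpos: "(\<Prod>i\<in>{..<n} - ?V. fP i) > 0" by (rule prod_pos) (use fPpos in auto)
  have "(\<Prod>i\<in>{..<n} - ?V. fP i) * (\<Prod>i\<in>?V. fE i) \<le> (\<Prod>i\<in>{..<n} - ?V. fP i) * (\<Prod>i\<in>?V. fP i)"
    using likE splitP splitE rest unfolding lik_def fE_def[symmetric] fP_def[symmetric] by simp
  then have Vle: "(\<Prod>i\<in>?V. fE i) \<le> (\<Prod>i\<in>?V. fP i)" using Rpos by simp
  define y where "y i = snd (snd (D i))" for i
  have fEV: "fE i = real (card {j\<in>?V. y j = y i}) / real (card ?V)" if "i \<in> ?V" for i
    using that c by (auto simp: fE_def E_def visits_def hit_def pmf_emp y_def cnt_visits)
  have fPV: "fP i = pmf (Phat s0 a0) (y i)" if "i \<in> ?V" for i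
    using that by (auto simp: fP_def visits_def hit_def y_def)
  have y: "y ` ?V \<subseteq> {..<nS}" using v by (auto simp: visits_def valid_def y_def)
  have p: "set_pmf (Phat s0 a0) \<subseteq> {..<nS}" using Pk s0 a0 by (auto simp: is_kernel_def)
  have le: "(\<Prod>i\<in>?V. real (card {j\<in>?V. y j = y i}) / real (card ?V)) \<le> (\<Prod>i\<in>?V. pmf (Phat s0 a0) (y i))"
  proof -
    have "(\<Prod>i\<in>?V. real (card {j\<in>?V. y j = y i}) / real (card ?V)) = (\<Prod>i\<in>?V. fE i)"
      by (rule prod.cong) (auto simp: fEV)
    also have "\<dots> \<le> (\<Prod>i\<in>?V. fP i)" by (rule Vle)
    also have "\<dots> = (\<Prod>i\<in>?V. pmf (Phat s0 a0) (y i))" by (rule prod.cong) (auto simp: fPV)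
    finally show ?thesis .
  qed
  have "pmf (Phat s0 a0) s' = real (card {i\<in>?V. y i = s'}) / real (card ?V)"
    by (rule gibbs[OF Vne(2) Vne(1) y p le])
  also have "\<dots> = pmf (emp n D s0 a0) s'" using c by (simp add: pmf_emp y_def cnt_visits)
  finally show ?thesis .
qed

lemma l1_le_2: "l1_dist nS p q \<le> 2"
proof -
  have "l1_dist nS p q \<le> (\<Sum>s'<nS. pmf p s' + pmf q s')"
    unfolding l1_dist_def by (intro sum_mono) (simp add: abs_le_iff)
  also have "\<dots> = (\<Sum>s'<nS. pmf p s') + (\<Sum>s'<nS. pmf q s')" by (simp add: sum.distrib)
  also have "\<dots> \<le> 2" using sum_pmf_le_1[of "{..<nS}" p] sum_pmf_le_1[of "{..<nS}" q] by simp
  finally show ?thesis .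
qed

lemma l1_nonneg: "0 \<le> l1_dist nS p q"
  unfolding l1_dist_def by (simp add: sum_nonneg)

lemma l1_triangle: "l1_dist nS p r \<le> l1_dist nS p q + l1_dist nS r q"
  unfolding l1_dist_def sum.distrib[symmetric] by (intro sum_mono) linarith

lemma l1_cong: "(\<And>x. pmf q x = pmf q' x) \<Longrightarrow> l1_dist nS p q = l1_dist nS p q'"
  unfolding l1_dist_def by simp

lemma l1_commute: "l1_dist nS p q = l1_dist nS q p"
  unfolding l1_dist_def by (simp add: abs_minus_commute)

lemma emp_avg_regroup:
  assumes v: "valid nS nA n D"
  shows "emp_avg n D (\<lambda>(s, a, s'). h s a) = (\<Sum>s<nS. \<Sum>a<nA. real (cnt n D s a) * h s a) / real n"
proof -
  let ?g = "\<lambda>i. (fst (D i), fst (snd (D i)))"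
  have img: "?g ` {..<n} \<subseteq> {..<nS} \<times> {..<nA}" using v by (auto simp: valid_def)
  have "(\<Sum>i<n. (\<lambda>(s, a, s'). h s a) (D i)) = (\<Sum>i<n. (\<lambda>x. h (fst x) (snd x)) (?g i))"
    by (simp add: case_prod_beta)
  also have "\<dots> = (\<Sum>x\<in>{..<nS} \<times> {..<nA}. real (card {i\<in>{..<n}. ?g i = x}) * h (fst x) (snd x))"
    by (rule regroup[OF _ _ img]) auto
  also have "\<dots> = (\<Sum>s<nS. \<Sum>a<nA. real (card {i\<in>{..<n}. ?g i = (s, a)}) * h s a)"
    by (simp add: sum.cartesian_product case_prod_beta prod_eq_iff)
  also have "\<dots> = (\<Sum>s<nS. \<Sum>a<nA. real (cnt n D s a) * h s a)"
    by (simp add: cnt_def hit_def)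
  finally show ?thesis unfolding emp_avg_def by simp
qed

lemma sum_hit:
  "(\<Sum>i<n. if hit s a (D i) then f i else 0) = (\<Sum>i\<in>visits n D s a. f i)"
  unfolding visits_def by (rule sum.inter_filter[symmetric]) simp

lemma l1_emp_bound:
  assumes v: "valid nS nA n D" and Pk: "is_kernel nS nA Pstar" and nS: "nS \<ge> 1"
    and s: "s < nS" and a: "a < nA" and c: "cnt n D s a \<ge> 1"
    and G2: "\<And>A. A \<subseteq> {..<nS} \<Longrightarrow>
        (\<Sum>i<n. if hit s a (D i) then indicator A (snd (snd (D i))) - measure_pmf.prob (Pstar s a) A else 0)
          \<le> sqrt (real (cnt n D s a) * Lg / 2)"
  shows "real (cnt n D s a) * (l1_dist nS (Pstar s a) (emp n D s a))\<^sup>2 \<le> 2 * Lg"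
proof -
  define N where "N = real (cnt n D s a)"
  have N1: "N \<ge> 1" using c by (simp add: N_def)
  define q where "q s' = pmf (emp n D s a) s'" for s'
  define p where "p s' = pmf (Pstar s a) s'" for s'
  define A where "A = {s'\<in>{..<nS}. p s' \<le> q s'}"
  have A: "A \<subseteq> {..<nS}" by (auto simp: A_def)
  have Ek: "is_kernel nS nA (emp n D)" by (rule emp_kernel[OF v nS])
  have sq: "(\<Sum>s'<nS. q s') = 1" unfolding q_def
    by (rule sum_pmf_eq_1) (use Ek s a in \<open>auto simp: is_kernel_def\<close>)
  have sp: "(\<Sum>s'<nS. p s') = 1" unfolding p_def
    by (rule sum_pmf_eq_1) (use Pk s a in \<open>auto simp: is_kernel_def\<close>)
  define T where "T = (\<Sum>s'\<in>A. q s' - p s')"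
  have split: "(\<Sum>s'<nS. f s') = (\<Sum>s'\<in>A. f s') + (\<Sum>s'\<in>{..<nS} - A. f s')" for f :: "nat \<Rightarrow> real"
    using A by (simp add: sum.subset_diff)
  have "(\<Sum>s'<nS. q s' - p s') = 0" using sq sp by (simp add: sum_subtractf)
  then have T2: "(\<Sum>s'\<in>{..<nS} - A. p s' - q s') = T"
    unfolding T_def split by (simp add: sum_subtractf algebra_simps)
  have l1: "l1_dist nS (Pstar s a) (emp n D s a) = 2 * T"
  proof -
    have "l1_dist nS (Pstar s a) (emp n D s a) = (\<Sum>s'<nS. \<bar>p s' - q s'\<bar>)"
      by (simp add: l1_dist_def p_def q_def)
    also have "\<dots> = (\<Sum>s'\<in>A. q s' - p s') + (\<Sum>s'\<in>{..<nS} - A. p s' - q s')"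
      unfolding split by (intro arg_cong2[where f="(+)"] sum.cong refl) (auto simp: A_def)
    finally show ?thesis using T2 T_def by simp
  qed
  have T0: "0 \<le> T" unfolding T_def by (intro sum_nonneg) (auto simp: A_def)
  define y where "y i = snd (snd (D i))" for i
  let ?V = "visits n D s a"
  have finV: "finite ?V" by (simp add: visits_def)
  have yV: "y ` ?V \<subseteq> {..<nS}" using v by (auto simp: visits_def valid_def y_def)
  have pA: "measure_pmf.prob (Pstar s a) A = (\<Sum>s'\<in>A. p s')"
    unfolding p_def using A by (simp add: measure_measure_pmf_finite finite_subset)
  have cntV: "card ?V = cnt n D s a" by (simp add: cnt_visits)
  have Vc: "cnt n D s a > 0" using c by simp
  have "(\<Sum>i<n. if hit s a (D i) then indicator A (y i) - measure_pmf.prob (Pstar s a) A else 0)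
      = (\<Sum>i\<in>?V. indicator A (y i)) - N * (\<Sum>s'\<in>A. p s')"
    unfolding sum_hit by (simp add: sum_subtractf pA N_def cntV)
  also have "(\<Sum>i\<in>?V. indicator A (y i)) = (\<Sum>b<nS. real (card {i\<in>?V. y i = b}) * indicator A b)"
    by (rule regroup[OF finV _ yV]) simp
  also have "\<dots> = (\<Sum>b<nS. N * q b * indicator A b)"
    by (intro sum.cong refl) (use Vc in \<open>simp add: q_def pmf_emp y_def N_def\<close>)
  also have "\<dots> = (\<Sum>b<nS. if b \<in> A then N * q b else 0)"
    by (intro sum.cong refl) (simp add: indicator_def)
  also have "\<dots> = (\<Sum>b\<in>{..<nS} \<inter> A. N * q b)"
    by (simp add: sum.inter_restrict)
  also have "{..<nS} \<inter> A = A" using A by auto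
  also have "(\<Sum>b\<in>A. N * q b) = N * (\<Sum>b\<in>A. q b)" by (simp add: sum_distrib_left)
  finally have "(\<Sum>i<n. if hit s a (D i) then indicator A (snd (snd (D i))) - measure_pmf.prob (Pstar s a) A else 0)
     = N * T" unfolding y_def T_def by (simp add: sum_subtractf right_diff_distrib)
  then have NT: "N * T \<le> sqrt (N * Lg / 2)" using G2[OF A] by (simp add: N_def)
  have NT0: "0 \<le> N * T" using T0 N1 by simp
  have sq0: "0 \<le> sqrt (N * Lg / 2)" using NT0 NT by linarith
  then have y0: "0 \<le> N * Lg / 2" by simp
  have "(N * T)\<^sup>2 \<le> (sqrt (N * Lg / 2))\<^sup>2" by (rule power_mono[OF NT NT0])
  then have "(N * T)\<^sup>2 \<le> N * Lg / 2" using y0 by simp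
  then have "N * (N * (4 * T\<^sup>2)) \<le> N * (2 * Lg)" by (simp add: power2_eq_square algebra_simps)
  then have "N * (4 * T\<^sup>2) \<le> 2 * Lg" using N1 by simp
  then show ?thesis unfolding l1 N_def by (simp add: power2_eq_square algebra_simps)
qed

lemma cs_occ:
  fixes w u rho :: "'a \<Rightarrow> real"
  assumes I: "finite I" and w0: "\<And>x. x \<in> I \<Longrightarrow> 0 \<le> w x" and w1: "(\<Sum>x\<in>I. w x) \<le> 1"
    and wC: "\<And>x. x \<in> I \<Longrightarrow> w x \<le> C * rho x"
  shows "(\<Sum>x\<in>I. w x * u x) \<le> sqrt (C * (\<Sum>x\<in>I. rho x * (u x)\<^sup>2))"
proof (rule real_le_rsqrt)
  have "(\<Sum>x\<in>I. w x * u x)\<^sup>2 = (\<Sum>x\<in>I. sqrt (w x) * (sqrt (w x) * u x))\<^sup>2"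
    using w0 by (intro arg_cong[where f="\<lambda>t. t\<^sup>2"] sum.cong refl) (simp add: mult.assoc[symmetric])
  also have "\<dots> \<le> (\<Sum>x\<in>I. (sqrt (w x))\<^sup>2) * (\<Sum>x\<in>I. (sqrt (w x) * u x)\<^sup>2)"
    by (rule Cauchy_Schwarz_ineq_sum)
  also have "\<dots> = (\<Sum>x\<in>I. w x) * (\<Sum>x\<in>I. w x * (u x)\<^sup>2)"
    using w0 by (intro arg_cong2[where f="(*)"] sum.cong refl) (simp_all add: power_mult_distrib)
  also have "\<dots> \<le> (\<Sum>x\<in>I. w x * (u x)\<^sup>2)"
  proof -
    have "0 \<le> (\<Sum>x\<in>I. w x * (u x)\<^sup>2)" using w0 by (intro sum_nonneg) simp
    then show ?thesis using w1 by (simp add: mult_left_le_one_le sum_nonneg w0)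
  qed
  also have "\<dots> \<le> (\<Sum>x\<in>I. C * rho x * (u x)\<^sup>2)"
    using wC by (intro sum_mono mult_right_mono) auto
  also have "\<dots> = C * (\<Sum>x\<in>I. rho x * (u x)\<^sup>2)" by (simp add: sum_distrib_left mult.assoc)
  finally show "(\<Sum>x\<in>I. w x * u x)\<^sup>2 \<le> C * (\<Sum>x\<in>I. rho x * (u x)\<^sup>2)" .
qed

lemma occ_nonneg: "0 \<le> occupancy H d0 P pol x"
  unfolding occupancy_def by (simp add: sum_nonneg)

lemma occ_sum_le_1:
  assumes "finite I" "H \<ge> 1"
  shows "(\<Sum>x\<in>I. occupancy H d0 P pol x) \<le> 1"
proof -
  have "(\<Sum>x\<in>I. occupancy H d0 P pol x) = (1 / real H) * (\<Sum>t<H. \<Sum>x\<in>I. pmf (sa_dist d0 P pol t) x)"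
    unfolding occupancy_def by (simp add: sum_divide_distrib sum.swap[of _ I])
  also have "\<dots> \<le> (1 / real H) * (\<Sum>t<H. 1)"
    by (intro mult_left_mono sum_mono sum_pmf_le_1 assms) simp
  also have "\<dots> = 1" using assms by simp
  finally show ?thesis .
qed

lemma occ_le_C:
  assumes nS: "nS \<ge> 1" and nA: "nA \<ge> 1"
    and occ: "\<forall>sa \<in> {..<nS} \<times> {..<nA}. occupancy H d0 P pol sa > 0 \<longrightarrow> pmf rho sa > 0"
    and x: "x \<in> {..<nS} \<times> {..<nA}"
  shows "occupancy H d0 P pol x \<le> concentrability nS nA H d0 P pol rho * pmf rho x"
proof (cases "pmf rho x > 0")
  case True
  have "occupancy H d0 P pol x / pmf rho x \<le> concentrability nS nA H d0 P pol rho"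
    unfolding concentrability_def by (rule Max_ge) (use x in auto)
  then show ?thesis using True by (simp add: field_simps)
next
  case False
  then have "occupancy H d0 P pol x = 0" using occ x occ_nonneg[of H d0 P pol x] by force
  moreover have "pmf rho x = 0" using False pmf_nonneg[of rho x] by linarith
  ultimately show ?thesis by simp
qed

lemma C_nonneg:
  assumes nS: "nS \<ge> 1" and nA: "nA \<ge> 1"
  shows "0 \<le> concentrability nS nA H d0 P pol rho"
proof -
  have "occupancy H d0 P pol (0, 0) / pmf rho (0, 0) \<le> concentrability nS nA H d0 P pol rho"
    unfolding concentrability_def by (rule Max_ge) (use nS nA in auto)
  moreover have "0 \<le> occupancy H d0 P pol (0, 0) / pmf rho (0, 0)" by (simp add: occ_nonneg)
  ultimately show ?thesis by linarith
qed

lemma sq_sum_le: "((x::real) + y)\<^sup>2 \<le> 2 * x\<^sup>2 + 2 * y\<^sup>2"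
proof -
  have "(x + y)\<^sup>2 + (x - y)\<^sup>2 = 2 * x\<^sup>2 + 2 * y\<^sup>2" by (simp add: power2_eq_square algebra_simps)
  moreover have "0 \<le> (x - y)\<^sup>2" by simp
  ultimately show ?thesis by linarith
qed

lemma det_main:
  fixes nS nA H n :: nat and Lg xi :: real
  assumes nS: "nS \<ge> 1" and nA: "nA \<ge> 1" and H: "H \<ge> 1" and n: "n \<ge> 1"
    and r: "\<forall>s a. s < nS \<longrightarrow> a < nA \<longrightarrow> 0 \<le> r s a \<and> r s a \<le> 1"
    and d0: "set_pmf d0 \<subseteq> {..<nS}" and Pk: "is_kernel nS nA Pstar"
    and pistar: "is_policy nS nA pistar"
    and occ: "\<forall>sa \<in> {..<nS} \<times> {..<nA}. occupancy H d0 Pstar pistar sa > 0 \<longrightarrow> pmf rho sa > 0"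
    and v: "valid nS nA n D"
    and G1: "\<forall>s<nS. \<forall>a<nA. 10 * Lg < real n * pmf rho (s, a) \<longrightarrow> real n * pmf rho (s, a) / 2 \<le> real (cnt n D s a)"
    and G2: "\<forall>s<nS. \<forall>a<nA. cnt n D s a \<ge> 1 \<longrightarrow> (\<forall>A. A \<subseteq> {..<nS} \<longrightarrow>
        (\<Sum>i<n. if hit s a (D i) then indicator A (snd (snd (D i))) - measure_pmf.prob (Pstar s a) A else 0)
          \<le> sqrt (real (cnt n D s a) * Lg / 2))"
    and Lg0: "0 \<le> Lg"
    and xi: "2 * real nS * real nA * Lg / real n \<le> xi"
    and out: "is_cppo_output nS nA H r d0 n D xi pihat"
  shows "value_fn H r d0 Pstar pistar - value_fn H r d0 Pstar pihat
     \<le> real H ^ 2 * sqrt (concentrability nS nA H d0 Pstar pistar rho *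
          (8 * xi + 40 * real nS * real nA * Lg / real n))"
proof -
  define C where "C = concentrability nS nA H d0 Pstar pistar rho"
  obtain Phat where mle: "is_mle nS nA n D Phat" and pih: "is_policy nS nA pihat"
    and opt: "\<forall>pol. is_policy nS nA pol \<longrightarrow>
           (INF P\<in>version_space nS nA n D Phat xi. value_fn H r d0 P pol)
           \<le> (INF P\<in>version_space nS nA n D Phat xi. value_fn H r d0 P pihat)"
    using out unfolding is_cppo_output_def by blast
  define VS where "VS = version_space nS nA n D Phat xi"
  have Phk: "is_kernel nS nA Phat" using mle by (simp add: is_mle_def)
  have n0: "real n > 0" using n by simp
  have sumsq: "(\<Sum>s<nS. \<Sum>a<nA. real (cnt n D s a) * f s a) / real n \<le> X
      \<Longrightarrow> (\<Sum>s<nS. \<Sum>a<nA. real (cnt n D s a) * f s a) \<le> real n * X" for f X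
    using n0 by (simp add: field_simps)
  have termP: "real (cnt n D s a) * (l1_dist nS (Pstar s a) (Phat s a))\<^sup>2 \<le> 2 * Lg"
    if s: "s < nS" and a: "a < nA" for s a
  proof (cases "cnt n D s a \<ge> 1")
    case True
    have "l1_dist nS (Pstar s a) (Phat s a) = l1_dist nS (Pstar s a) (emp n D s a)"
      by (rule l1_cong) (rule mle_emp[OF mle v nS], use True in simp)
    then show ?thesis using l1_emp_bound[OF v Pk nS s a True, of Lg] G2 s a True by simp
  next
    case False
    then have "cnt n D s a = 0" by simp
    then show ?thesis using Lg0 by simp
  qed
  have avgP: "emp_avg n D (\<lambda>(s, a, s'). (l1_dist nS (Pstar s a) (Phat s a))\<^sup>2) \<le> xi"
  proof -
    have "emp_avg n D (\<lambda>(s, a, s'). (l1_dist nS (Pstar s a) (Phat s a))\<^sup>2)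
       = (\<Sum>s<nS. \<Sum>a<nA. real (cnt n D s a) * (l1_dist nS (Pstar s a) (Phat s a))\<^sup>2) / real n"
      by (rule emp_avg_regroup[OF v])
    also have "\<dots> \<le> (\<Sum>s<nS. \<Sum>a<nA. 2 * Lg) / real n"
      by (intro divide_right_mono sum_mono termP) auto
    also have "\<dots> = 2 * real nS * real nA * Lg / real n" by simp
    finally show ?thesis using xi by linarith
  qed
  have PinVS: "Pstar \<in> VS" using Pk avgP by (simp add: VS_def version_space_def)
  define B where "B = real H ^ 2 * sqrt (C * (8 * xi + 40 * real nS * real nA * Lg / real n))"
  have bound: "value_fn H r d0 Pstar pistar - value_fn H r d0 P pistar \<le> B" if P: "P \<in> VS" for P
  proof -
    have Pk': "is_kernel nS nA P" and avg1: "emp_avg n D (\<lambda>(s, a, s'). (l1_dist nS (P s a) (Phat s a))\<^sup>2) \<le> xi"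
      using P by (auto simp: VS_def version_space_def)
    define u where "u s a = l1_dist nS (P s a) (Pstar s a)" for s a
    have S1: "(\<Sum>s<nS. \<Sum>a<nA. real (cnt n D s a) * (l1_dist nS (P s a) (Phat s a))\<^sup>2) \<le> real n * xi"
      by (rule sumsq) (use avg1 emp_avg_regroup[OF v] in simp)
    have S2: "(\<Sum>s<nS. \<Sum>a<nA. real (cnt n D s a) * (l1_dist nS (Pstar s a) (Phat s a))\<^sup>2) \<le> real n * xi"
      by (rule sumsq) (use avgP emp_avg_regroup[OF v] in simp)
    have S3: "(\<Sum>s<nS. \<Sum>a<nA. real (cnt n D s a) * (u s a)\<^sup>2) \<le> 4 * real n * xi"
    proof -
      have pt: "(u s a)\<^sup>2 \<le> 2 * (l1_dist nS (P s a) (Phat s a))\<^sup>2 + 2 * (l1_dist nS (Pstar s a) (Phat s a))\<^sup>2" for s a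
      proof -
        have "u s a \<le> l1_dist nS (P s a) (Phat s a) + l1_dist nS (Pstar s a) (Phat s a)"
          unfolding u_def by (rule l1_triangle)
        moreover have "0 \<le> u s a" unfolding u_def by (rule l1_nonneg)
        ultimately have "(u s a)\<^sup>2 \<le> (l1_dist nS (P s a) (Phat s a) + l1_dist nS (Pstar s a) (Phat s a))\<^sup>2"
          by (simp add: power_mono)
        also have "\<dots> \<le> 2 * (l1_dist nS (P s a) (Phat s a))\<^sup>2 + 2 * (l1_dist nS (Pstar s a) (Phat s a))\<^sup>2"
          by (rule sq_sum_le)
        finally show ?thesis .
      qed
      have "(\<Sum>s<nS. \<Sum>a<nA. real (cnt n D s a) * (u s a)\<^sup>2)
          \<le> (\<Sum>s<nS. \<Sum>a<nA. 2 * (real (cnt n D s a) * (l1_dist nS (P s a) (Phat s a))\<^sup>2)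
                + 2 * (real (cnt n D s a) * (l1_dist nS (Pstar s a) (Phat s a))\<^sup>2))"
      proof (intro sum_mono)
        fix s a
        have "real (cnt n D s a) * (u s a)\<^sup>2 \<le> real (cnt n D s a) *
           (2 * (l1_dist nS (P s a) (Phat s a))\<^sup>2 + 2 * (l1_dist nS (Pstar s a) (Phat s a))\<^sup>2)"
          by (intro mult_left_mono pt) simp
        then show "real (cnt n D s a) * (u s a)\<^sup>2 \<le> 2 * (real (cnt n D s a) * (l1_dist nS (P s a) (Phat s a))\<^sup>2)
                + 2 * (real (cnt n D s a) * (l1_dist nS (Pstar s a) (Phat s a))\<^sup>2)"
          by (simp add: algebra_simps)
      qed
      also have "\<dots> = 2 * (\<Sum>s<nS. \<Sum>a<nA. real (cnt n D s a) * (l1_dist nS (P s a) (Phat s a))\<^sup>2)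
          + 2 * (\<Sum>s<nS. \<Sum>a<nA. real (cnt n D s a) * (l1_dist nS (Pstar s a) (Phat s a))\<^sup>2)"
        by (simp add: sum.distrib sum_distrib_left)
      also have "\<dots> \<le> 4 * real n * xi" using S1 S2 by linarith
      finally show ?thesis .
    qed
    have S4: "(\<Sum>s<nS. \<Sum>a<nA. pmf rho (s, a) * (u s a)\<^sup>2)
        \<le> 8 * xi + 40 * real nS * real nA * Lg / real n"
    proof -
      have pt: "pmf rho (s, a) * (u s a)\<^sup>2 \<le> 2 / real n * (real (cnt n D s a) * (u s a)\<^sup>2) + 40 * Lg / real n"
        if s: "s < nS" and a: "a < nA" for s a
      proof -
        have u2: "(u s a)\<^sup>2 \<le> 4" using l1_le_2[of nS "P s a" "Pstar s a"] l1_nonneg[of nS "P s a" "Pstar s a"]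
          unfolding u_def using mult_mono[of "l1_dist nS (P s a) (Pstar s a)" 2 "l1_dist nS (P s a) (Pstar s a)" 2]
          by (simp add: power2_eq_square)
        have u0: "0 \<le> (u s a)\<^sup>2" by simp
        show ?thesis
        proof (cases "10 * Lg < real n * pmf rho (s, a)")
          case True
          then have "real n * pmf rho (s, a) / 2 \<le> real (cnt n D s a)" using G1 s a by blast
          then have "pmf rho (s, a) \<le> 2 / real n * real (cnt n D s a)" using n0 by (simp add: field_simps)
          then have "pmf rho (s, a) * (u s a)\<^sup>2 \<le> 2 / real n * real (cnt n D s a) * (u s a)\<^sup>2"
            by (intro mult_right_mono u0)
          then have "pmf rho (s, a) * (u s a)\<^sup>2 \<le> 2 / real n * (real (cnt n D s a) * (u s a)\<^sup>2)"
            by (simp only: mult.assoc)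
          moreover have "0 \<le> 40 * Lg / real n" using Lg0 by simp
          ultimately show ?thesis by linarith
        next
          case False
          then have "pmf rho (s, a) \<le> 10 * Lg / real n" using n0 by (simp add: field_simps)
          then have "pmf rho (s, a) * (u s a)\<^sup>2 \<le> 10 * Lg / real n * 4"
            by (intro mult_mono u2 u0) (use Lg0 in auto)
          moreover have "0 \<le> 2 / real n * (real (cnt n D s a) * (u s a)\<^sup>2)" by simp
          ultimately show ?thesis by linarith
        qed
      qed
      have "(\<Sum>s<nS. \<Sum>a<nA. pmf rho (s, a) * (u s a)\<^sup>2)
          \<le> (\<Sum>s<nS. \<Sum>a<nA. 2 / real n * (real (cnt n D s a) * (u s a)\<^sup>2) + 40 * Lg / real n)"
        by (intro sum_mono pt) auto
      also have "\<dots> = 2 / real n * (\<Sum>s<nS. \<Sum>a<nA. real (cnt n D s a) * (u s a)\<^sup>2)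
           + 40 * real nS * real nA * Lg / real n"
        by (simp add: sum.distrib sum_distrib_left)
      also have "\<dots> \<le> 2 / real n * (4 * real n * xi) + 40 * real nS * real nA * Lg / real n"
        by (intro add_right_mono mult_left_mono S3) simp
      also have "\<dots> = 8 * xi + 40 * real nS * real nA * Lg / real n" using n0 by simp
      finally show ?thesis .
    qed
    have S5: "(\<Sum>s<nS. \<Sum>a<nA. occupancy H d0 Pstar pistar (s, a) * u s a)
        \<le> sqrt (C * (\<Sum>s<nS. \<Sum>a<nA. pmf rho (s, a) * (u s a)\<^sup>2))"
    proof -
      have "(\<Sum>x\<in>{..<nS} \<times> {..<nA}. occupancy H d0 Pstar pistar x * u (fst x) (snd x))
          \<le> sqrt (C * (\<Sum>x\<in>{..<nS} \<times> {..<nA}. pmf rho x * (u (fst x) (snd x))\<^sup>2))"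
      proof (rule cs_occ)
        show "(\<Sum>x\<in>{..<nS} \<times> {..<nA}. occupancy H d0 Pstar pistar x) \<le> 1"
          by (rule occ_sum_le_1[OF _ H]) simp
      qed (auto simp: occ_nonneg C_def occ_le_C[OF nS nA occ])
      then show ?thesis by (simp add: sum.cartesian_product case_prod_beta)
    qed
    have C0: "0 \<le> C" unfolding C_def by (rule C_nonneg[OF nS nA])
    have "value_fn H r d0 Pstar pistar - value_fn H r d0 P pistar
        \<le> real H ^ 2 * (\<Sum>s<nS. \<Sum>a<nA. occupancy H d0 Pstar pistar (s, a) * u s a)"
      unfolding u_def by (rule simulation[OF d0 Pk' Pk pistar r H])
    also have "\<dots> \<le> real H ^ 2 * sqrt (C * (\<Sum>s<nS. \<Sum>a<nA. pmf rho (s, a) * (u s a)\<^sup>2))"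
      by (intro mult_left_mono S5) simp
    also have "\<dots> \<le> B" unfolding B_def
      by (intro mult_left_mono real_sqrt_le_mono mult_left_mono[OF S4 C0]) simp
    finally show ?thesis .
  qed
  have VSne: "VS \<noteq> {}" using PinVS by auto
  have lowb: "value_fn H r d0 Pstar pistar - B \<le> (INF P\<in>VS. value_fn H r d0 P pistar)"
    by (rule cINF_greatest[OF VSne]) (use bound in force)
  have bdd: "bdd_below ((\<lambda>P. value_fn H r d0 P pihat) ` VS)"
    by (rule bdd_belowI[where m=0]) (auto simp: VS_def version_space_def intro!: value_nonneg[OF d0 _ pih r])
  have "(INF P\<in>VS. value_fn H r d0 P pistar) \<le> (INF P\<in>VS. value_fn H r d0 P pihat)"
    using opt pistar unfolding VS_def by blast
  also have "\<dots> \<le> value_fn H r d0 Pstar pihat" by (rule cINF_lower[OF bdd PinVS])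
  finally show ?thesis using lowb unfolding B_def C_def by linarith
qed

definition sdev :: "nat \<Rightarrow> (nat \<Rightarrow> nat \<Rightarrow> nat pmf) \<Rightarrow> nat \<Rightarrow> nat \<Rightarrow> nat set \<Rightarrow> (nat \<Rightarrow> nat \<times> nat \<times> nat) \<Rightarrow> real" where
  "sdev n Pstar s a A D = (\<Sum>i<n. if hit s a (D i) then indicator A (snd (snd (D i))) - measure_pmf.prob (Pstar s a) A else 0)"

lemma zf_sum:
  "(\<Sum>i<n. zf s a A (measure_pmf.prob (Pstar s a) A) lam (D i))
     = lam * sdev n Pstar s a A D - lam\<^sup>2 / 8 * real (cnt n D s a)"
proof -
  have "(\<Sum>i<n. zf s a A (measure_pmf.prob (Pstar s a) A) lam (D i))
     = (\<Sum>i<n. lam * (if hit s a (D i) then indicator A (snd (snd (D i))) - measure_pmf.prob (Pstar s a) A else 0)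
          - lam\<^sup>2 / 8 * (if hit s a (D i) then 1 else 0))"
    by (intro sum.cong refl) (simp add: zf_def)
  also have "\<dots> = lam * sdev n Pstar s a A D - lam\<^sup>2 / 8 * real (cnt n D s a)"
    unfolding sum_subtractf sdev_def cnt_sum by (simp add: sum_distrib_left)
  finally show ?thesis .
qed

lemma F2_prob:
  assumes Lg: "Lg > 0" and m: "m \<ge> 1"
  shows "measure_pmf.prob (data_pmf n rho Pstar)
     {D. cnt n D s a = m \<and> sqrt (real m * Lg / 2) < sdev n Pstar s a A D} \<le> exp (- Lg)"
proof -
  define lam where "lam = sqrt (8 * Lg / real m)"
  have m0: "real m > 0" using m by simp
  have lam0: "lam > 0" using Lg m0 by (simp add: lam_def)
  have lam2: "lam\<^sup>2 = 8 * Lg / real m" unfolding lam_def using Lg m0 by simp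
  have lamsq: "lam * sqrt (real m * Lg / 2) = 2 * Lg"
  proof -
    have "lam * sqrt (real m * Lg / 2) = sqrt (8 * Lg / real m * (real m * Lg / 2))"
      unfolding lam_def by (rule real_sqrt_mult[symmetric])
    also have "8 * Lg / real m * (real m * Lg / 2) = (2 * Lg)\<^sup>2" using m0 by (simp add: power2_eq_square)
    also have "sqrt ((2 * Lg)\<^sup>2) = 2 * Lg" using Lg by (simp only: real_sqrt_abs)
    finally show ?thesis .
  qed
  have sub: "{D. cnt n D s a = m \<and> sqrt (real m * Lg / 2) < sdev n Pstar s a A D}
      \<subseteq> {D. Lg \<le> (\<Sum>i<n. zf s a A (measure_pmf.prob (Pstar s a) A) lam (D i))}"
  proof
    fix D assume "D \<in> {D. cnt n D s a = m \<and> sqrt (real m * Lg / 2) < sdev n Pstar s a A D}"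
    then have c: "cnt n D s a = m" and S: "sqrt (real m * Lg / 2) < sdev n Pstar s a A D" by auto
    have "lam * sqrt (real m * Lg / 2) \<le> lam * sdev n Pstar s a A D"
      using S lam0 by simp
    moreover have "lam\<^sup>2 / 8 * real m = Lg" using lam2 m0 by simp
    ultimately have "Lg \<le> (\<Sum>i<n. zf s a A (measure_pmf.prob (Pstar s a) A) lam (D i))"
      unfolding zf_sum c using lamsq by linarith
    then show "D \<in> {D. Lg \<le> (\<Sum>i<n. zf s a A (measure_pmf.prob (Pstar s a) A) lam (D i))}" by simp
  qed
  have "measure_pmf.prob (data_pmf n rho Pstar)
     {D. cnt n D s a = m \<and> sqrt (real m * Lg / 2) < sdev n Pstar s a A D}
     \<le> measure_pmf.prob (data_pmf n rho Pstar)
        {D. Lg \<le> (\<Sum>i<n. zf s a A (measure_pmf.prob (Pstar s a) A) lam (D i))}"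
    by (rule measure_pmf.finite_measure_mono[OF sub]) simp
  also have "\<dots> \<le> exp (- Lg)" by (rule dev_high[OF lam0])
  finally show ?thesis .
qed

lemma F1_prob:
  "measure_pmf.prob (data_pmf n rho Pstar)
     {D. 10 * Lg < real n * pmf rho (s, a) \<and> real (cnt n D s a) < real n * pmf rho (s, a) / 2} \<le> exp (- Lg)"
proof (cases "10 * Lg < real n * pmf rho (s, a)")
  case True
  have "measure_pmf.prob (data_pmf n rho Pstar)
     {D. 10 * Lg < real n * pmf rho (s, a) \<and> real (cnt n D s a) < real n * pmf rho (s, a) / 2}
     \<le> measure_pmf.prob (data_pmf n rho Pstar) {D. real (cnt n D s a) < real n * pmf rho (s, a) / 2}"
    by (rule measure_pmf.finite_measure_mono) auto
  also have "\<dots> \<le> exp (- (real n * pmf rho (s, a)) / 10)" by (rule count_low)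
  also have "\<dots> \<le> exp (- Lg)" using True by simp
  finally show ?thesis .
qed simp

lemma cnt_le: "cnt n D s a \<le> n"
proof -
  have "cnt n D s a \<le> card {..<n}" unfolding cnt_def by (rule card_mono) auto
  then show ?thesis by simp
qed

lemma main_thm:
  fixes nS nA H n :: nat and \<delta> :: real and r :: "nat \<Rightarrow> nat \<Rightarrow> real" and d0 :: "nat pmf"
    and Pstar :: "nat \<Rightarrow> nat \<Rightarrow> nat pmf" and rho :: "(nat \<times> nat) pmf" and pistar :: "nat \<Rightarrow> nat \<Rightarrow> nat pmf"
  assumes nS: "nS \<ge> 1" and nA: "nA \<ge> 1" and H: "H \<ge> 1" and n: "n \<ge> 1"
    and d1: "0 < \<delta>" and d2: "\<delta> < 1"
    and r: "\<forall>s a. s < nS \<longrightarrow> a < nA \<longrightarrow> 0 \<le> r s a \<and> r s a \<le> 1"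
    and d0: "set_pmf d0 \<subseteq> {..<nS}" and Pk: "is_kernel nS nA Pstar"
    and rho: "set_pmf rho \<subseteq> {..<nS} \<times> {..<nA}"
    and pistar: "is_policy nS nA pistar"
    and occ: "\<forall>sa \<in> {..<nS} \<times> {..<nA}. occupancy H d0 Pstar pistar sa > 0 \<longrightarrow> pmf rho sa > 0"
  shows "measure_pmf.prob (data_pmf n rho Pstar)
             {D. \<forall>pihat. is_cppo_output nS nA H r d0 n D
                    (4 * real nS ^ 2 * real nA * ln (real n * real nS * real nA * 2 / \<delta>) / real n) pihat \<longrightarrow>
                   value_fn H r d0 Pstar pistar - value_fn H r d0 Pstar pihat
                   \<le> 11 * real H ^ 2 *
                      sqrt (concentrability nS nA H d0 Pstar pistar rho * real nS ^ 2 * real nA *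
                            ln (real n * real nS * real nA * 2 / \<delta>) / real n)}
           \<ge> 1 - \<delta>"
proof -
  define M where "M = data_pmf n rho Pstar"
  define arg where "arg = real n * real nS * real nA * 2 / \<delta>"
  define l where "l = ln arg"
  define K where "K = real nS * real nA"
  define Lg where "Lg = ln (arg * 2 ^ nS)"
  define xi where "xi = 4 * real nS ^ 2 * real nA * l / real n"
  define C where "C = concentrability nS nA H d0 Pstar pistar rho"
  have n0: "real n > 0" using n by simp
  have "0 < n * nS * nA" using n nS nA by simp
  then have "1 \<le> real (n * nS * nA)" by linarith
  then have K1: "1 \<le> real n * real nS * real nA" by simp
  have arg2: "2 \<le> arg"
  proof -
    have "real n * real nS * real nA * 2 \<le> real n * real nS * real nA * 2 / \<delta>"
    proof -
      have "\<delta> * (real n * real nS * real nA * 2) \<le> real n * real nS * real nA * 2"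
        using d1 d2 K1 by (intro mult_left_le_one_le) auto
      then show ?thesis using d1 by (simp add: le_divide_eq mult.commute)
    qed
    then show ?thesis using K1 unfolding arg_def by linarith
  qed
  have argpos: "arg > 0" using arg2 by simp
  have l2: "ln 2 \<le> l" unfolding l_def using arg2 by simp
  have ln2pos: "0 < ln (2::real)" by simp
  have lpos: "0 < l" using l2 ln2pos by linarith
  have LgEq: "Lg = l + real nS * ln 2"
    unfolding Lg_def l_def using argpos by (simp add: ln_mult ln_realpow)
  have "0 \<le> real nS * ln 2" using ln2pos by simp
  then have Lgpos: "0 < Lg" using LgEq lpos by linarith
  have Lgle: "Lg \<le> 2 * real nS * l"
  proof -
    have "real nS * ln 2 \<le> real nS * l" using l2 by (intro mult_left_mono) auto
    moreover have "l \<le> real nS * l" using nS lpos by (simp add: mult_le_cancel_right1)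
    ultimately show ?thesis using LgEq by linarith
  qed
  have xiok: "2 * real nS * real nA * Lg / real n \<le> xi"
  proof -
    have "2 * real nS * real nA * Lg \<le> 2 * real nS * real nA * (2 * real nS * l)"
      using Lgle by (intro mult_left_mono) auto
    also have "\<dots> = 4 * real nS ^ 2 * real nA * l" by (simp add: power2_eq_square)
    finally show ?thesis unfolding xi_def using n0 by (simp add: divide_right_mono)
  qed
  have finalarith: "8 * xi + 40 * real nS * real nA * Lg / real n \<le> 112 * (real nS ^ 2 * real nA * l / real n)"
  proof -
    have "40 * real nS * real nA * Lg \<le> 40 * real nS * real nA * (2 * real nS * l)"
      using Lgle by (intro mult_left_mono) auto
    also have "\<dots> = 80 * (real nS ^ 2 * real nA * l)" by (simp add: power2_eq_square)
    finally have "40 * real nS * real nA * Lg / real n \<le> 80 * (real nS ^ 2 * real nA * l) / real n"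
      using n0 by (simp add: divide_right_mono)
    also have "80 * (real nS ^ 2 * real nA * l) / real n = 80 * (real nS ^ 2 * real nA * l / real n)" by simp
    finally have a: "40 * real nS * real nA * Lg / real n \<le> 80 * (real nS ^ 2 * real nA * l / real n)" .
    have b: "8 * xi = 32 * (real nS ^ 2 * real nA * l / real n)" unfolding xi_def by simp
    have c: "8 * xi + 40 * real nS * real nA * Lg / real n
       \<le> 32 * (real nS ^ 2 * real nA * l / real n) + 80 * (real nS ^ 2 * real nA * l / real n)"
      unfolding b by (rule add_left_mono[OF a])
    show ?thesis by (rule order.trans[OF c]) (simp only: distrib_right[symmetric], simp)
  qed
  define F1 where "F1 x = {D. 10 * Lg < real n * pmf rho x \<and> real (cnt n D (fst x) (snd x)) < real n * pmf rho x / 2}"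
    for x :: "nat \<times> nat"
  define F2 where "F2 y = {D. cnt n D (fst (fst y)) (snd (fst y)) = snd (snd y) \<and>
      sqrt (real (snd (snd y)) * Lg / 2) < sdev n Pstar (fst (fst y)) (snd (fst y)) (fst (snd y)) D}"
    for y :: "(nat \<times> nat) \<times> (nat set \<times> nat)"
  define I1 where "I1 = {..<nS} \<times> {..<nA}"
  define I2 where "I2 = ({..<nS} \<times> {..<nA}) \<times> (Pow {..<nS} \<times> {1..n})"
  define Bad where "Bad = - set_pmf M \<union> (\<Union>x\<in>I1. F1 x) \<union> (\<Union>y\<in>I2. F2 y)"
  have good: "D \<in> {D. \<forall>pihat. is_cppo_output nS nA H r d0 n D xi pihat \<longrightarrow>
                   value_fn H r d0 Pstar pistar - value_fn H r d0 Pstar pihat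
                   \<le> 11 * real H ^ 2 * sqrt (C * real nS ^ 2 * real nA * l / real n)}"
    if D: "D \<notin> Bad" for D
  proof -
    have Dset: "D \<in> set_pmf M" using D by (auto simp: Bad_def)
    have v: "valid nS nA n D"
      unfolding valid_def using data_support[OF Dset[unfolded M_def]] sample_support[OF _ rho Pk] by blast
    have G1: "\<forall>s<nS. \<forall>a<nA. 10 * Lg < real n * pmf rho (s, a) \<longrightarrow> real n * pmf rho (s, a) / 2 \<le> real (cnt n D s a)"
    proof (intro allI impI)
      fix s a assume "s < nS" "a < nA" "10 * Lg < real n * pmf rho (s, a)"
      then have "D \<notin> F1 (s, a)" using D by (auto simp: Bad_def I1_def)
      then show "real n * pmf rho (s, a) / 2 \<le> real (cnt n D s a)"
        using \<open>10 * Lg < real n * pmf rho (s, a)\<close> by (auto simp: F1_def)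
    qed
    have G2: "\<forall>s<nS. \<forall>a<nA. cnt n D s a \<ge> 1 \<longrightarrow> (\<forall>A. A \<subseteq> {..<nS} \<longrightarrow>
        (\<Sum>i<n. if hit s a (D i) then indicator A (snd (snd (D i))) - measure_pmf.prob (Pstar s a) A else 0)
          \<le> sqrt (real (cnt n D s a) * Lg / 2))"
    proof (intro allI impI)
      fix s a A assume s: "s < nS" and a: "a < nA" and c: "cnt n D s a \<ge> 1" and A: "A \<subseteq> {..<nS}"
      have "((s, a), (A, cnt n D s a)) \<in> I2" using s a c A cnt_le[of n D s a] by (auto simp: I2_def)
      then have "D \<notin> F2 ((s, a), (A, cnt n D s a))" using D by (auto simp: Bad_def)
      then show "(\<Sum>i<n. if hit s a (D i) then indicator A (snd (snd (D i))) - measure_pmf.prob (Pstar s a) A else 0)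
          \<le> sqrt (real (cnt n D s a) * Lg / 2)" by (auto simp: F2_def sdev_def)
    qed
    show ?thesis
    proof (intro CollectI allI impI)
      fix pihat assume out: "is_cppo_output nS nA H r d0 n D xi pihat"
      have "value_fn H r d0 Pstar pistar - value_fn H r d0 Pstar pihat
          \<le> real H ^ 2 * sqrt (C * (8 * xi + 40 * real nS * real nA * Lg / real n))"
        unfolding C_def
        by (rule det_main[OF nS nA H n r d0 Pk pistar occ v G1 G2 less_imp_le[OF Lgpos] xiok out])
      also have "\<dots> \<le> real H ^ 2 * sqrt (C * (112 * (real nS ^ 2 * real nA * l / real n)))"
        using C_nonneg[OF nS nA] finalarith unfolding C_def
        by (intro mult_left_mono real_sqrt_le_mono mult_left_mono) auto
      also have "\<dots> = real H ^ 2 * (sqrt 112 * sqrt (C * real nS ^ 2 * real nA * l / real n))"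
        by (simp add: real_sqrt_mult[symmetric] mult_ac)
      also have "\<dots> \<le> real H ^ 2 * (11 * sqrt (C * real nS ^ 2 * real nA * l / real n))"
      proof -
        have "sqrt 112 \<le> sqrt ((11::real)\<^sup>2)" by (rule real_sqrt_le_mono) simp
        then have s112: "sqrt 112 \<le> (11::real)" by (simp only: real_sqrt_abs)
        have C0: "0 \<le> C" unfolding C_def by (rule C_nonneg[OF nS nA])
        show ?thesis using C0 lpos by (intro mult_left_mono mult_right_mono s112) auto
      qed
      finally show "value_fn H r d0 Pstar pistar - value_fn H r d0 Pstar pihat
          \<le> 11 * real H ^ 2 * sqrt (C * real nS ^ 2 * real nA * l / real n)" by (simp add: mult_ac)
    qed
  qed
  have e: "exp (- Lg) = \<delta> / (2 * K * 2 ^ nS * real n)"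
  proof -
    have pos: "arg * 2 ^ nS > 0" using argpos by simp
    have "exp (- Lg) = inverse (arg * 2 ^ nS)" unfolding Lg_def exp_minus exp_ln[OF pos] ..
    then show ?thesis unfolding arg_def K_def using d1 by (simp add: field_simps)
  qed
  have p0: "measure_pmf.prob M (- set_pmf M) = 0" by (simp add: measure_pmf_zero_iff)
  have p1: "measure_pmf.prob M (\<Union>x\<in>I1. F1 x) \<le> K * exp (- Lg)"
  proof -
    have "measure_pmf.prob M (\<Union>x\<in>I1. F1 x) \<le> (\<Sum>x\<in>I1. measure_pmf.prob M (F1 x))"
      by (rule measure_pmf.finite_measure_subadditive_finite) (auto simp: I1_def)
    also have "\<dots> \<le> (\<Sum>x\<in>I1. exp (- Lg))"
    proof (intro sum_mono)
      fix x :: "nat \<times> nat"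
      obtain s a where x: "x = (s, a)" by (cases x)
      show "measure_pmf.prob M (F1 x) \<le> exp (- Lg)"
        using F1_prob[of n rho Pstar Lg s a] by (simp add: M_def F1_def x)
    qed
    also have "\<dots> = K * exp (- Lg)" by (simp add: I1_def K_def)
    finally show ?thesis .
  qed
  have p2: "measure_pmf.prob M (\<Union>y\<in>I2. F2 y) \<le> K * 2 ^ nS * real n * exp (- Lg)"
  proof -
    have "measure_pmf.prob M (\<Union>y\<in>I2. F2 y) \<le> (\<Sum>y\<in>I2. measure_pmf.prob M (F2 y))"
      by (rule measure_pmf.finite_measure_subadditive_finite) (auto simp: I2_def)
    also have "\<dots> \<le> (\<Sum>y\<in>I2. exp (- Lg))"
    proof (intro sum_mono)
      fix y assume "y \<in> I2"
      then have "snd (snd y) \<ge> 1" by (auto simp: I2_def)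
      then show "measure_pmf.prob M (F2 y) \<le> exp (- Lg)"
        unfolding M_def F2_def by (rule F2_prob[OF Lgpos])
    qed
    also have "\<dots> = K * 2 ^ nS * real n * exp (- Lg)"
      by (simp add: I2_def K_def card_cartesian_product card_Pow)
    finally show ?thesis .
  qed
  have pBad: "measure_pmf.prob M Bad \<le> \<delta>"
  proof -
    have "measure_pmf.prob M Bad \<le> measure_pmf.prob M (- set_pmf M \<union> (\<Union>x\<in>I1. F1 x))
        + measure_pmf.prob M (\<Union>y\<in>I2. F2 y)"
      unfolding Bad_def by (rule measure_subadditive) (auto simp: measure_pmf.emeasure_eq_measure)
    also have "measure_pmf.prob M (- set_pmf M \<union> (\<Union>x\<in>I1. F1 x))
        \<le> measure_pmf.prob M (- set_pmf M) + measure_pmf.prob M (\<Union>x\<in>I1. F1 x)"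
      by (rule measure_subadditive) (auto simp: measure_pmf.emeasure_eq_measure)
    finally have "measure_pmf.prob M Bad \<le> K * exp (- Lg) + K * 2 ^ nS * real n * exp (- Lg)"
      using p0 p1 p2 by linarith
    also have "\<dots> \<le> 2 * K * 2 ^ nS * real n * exp (- Lg)"
    proof -
      have "K * exp (- Lg) \<le> K * 2 ^ nS * real n * exp (- Lg)"
      proof -
        have a1: "1 \<le> (2::real) ^ nS" by simp
        have a2: "1 \<le> real n" using n by simp
        have "1 * 1 \<le> (2::real) ^ nS * real n" by (rule mult_mono[OF a1 a2]) auto
        then have "1 \<le> (2::real) ^ nS * real n" by simp
        then have "K * exp (- Lg) * 1 \<le> K * exp (- Lg) * (2 ^ nS * real n)"
          by (intro mult_left_mono) (auto simp: K_def)
        then show ?thesis by (simp add: mult_ac)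
      qed
      then show ?thesis by linarith
    qed
    also have "\<dots> = \<delta>" unfolding e using n nS nA by (simp add: K_def field_simps)
    finally show ?thesis .
  qed
  have "1 - \<delta> \<le> 1 - measure_pmf.prob M Bad" using pBad by simp
  also have "1 - measure_pmf.prob M Bad = measure_pmf.prob M (UNIV - Bad)"
    using measure_pmf.prob_compl[of Bad M] by simp
  also have "\<dots> \<le> measure_pmf.prob M {D. \<forall>pihat. is_cppo_output nS nA H r d0 n D xi pihat \<longrightarrow>
                   value_fn H r d0 Pstar pistar - value_fn H r d0 Pstar pihat
                   \<le> 11 * real H ^ 2 * sqrt (C * real nS ^ 2 * real nA * l / real n)}"
    by (rule measure_pmf.finite_measure_mono) (use good in auto)
  finally show ?thesis unfolding M_def xi_def C_def l_def arg_def .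
qed

theorem corollary1:
  "\<exists>c1 c2 c3 c4 :: real. c1 > 0 \<and> c2 > 0 \<and> c3 > 0 \<and> c4 > 0 \<and>
    (\<forall>(nS::nat) (nA::nat) (H::nat) (n::nat) (\<delta>::real) r d0 Pstar rho pistar.
       nS \<ge> 1 \<longrightarrow> nA \<ge> 1 \<longrightarrow> H \<ge> 1 \<longrightarrow> n \<ge> 1 \<longrightarrow> 0 < \<delta> \<longrightarrow> \<delta> < 1 \<longrightarrow>
       (\<forall>s a. s < nS \<longrightarrow> a < nA \<longrightarrow> 0 \<le> r s a \<and> r s a \<le> 1) \<longrightarrow>
       set_pmf d0 \<subseteq> {..<nS} \<longrightarrow>
       is_kernel nS nA Pstar \<longrightarrow>
       set_pmf rho \<subseteq> {..<nS} \<times> {..<nA} \<longrightarrow>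
       is_policy nS nA pistar \<longrightarrow>
       (\<forall>sa \<in> {..<nS} \<times> {..<nA}. occupancy H d0 Pstar pistar sa > 0 \<longrightarrow> pmf rho sa > 0) \<longrightarrow>
       (let xi = c1 * real nS ^ 2 * real nA * ln (real n * real nS * real nA * c2 / \<delta>) / real n;
            C = concentrability nS nA H d0 Pstar pistar rho
        in measure_pmf.prob (data_pmf n rho Pstar)
             {D. \<forall>pihat. is_cppo_output nS nA H r d0 n D xi pihat \<longrightarrow>
                   value_fn H r d0 Pstar pistar - value_fn H r d0 Pstar pihat
                   \<le> c3 * real H ^ 2 *
                      sqrt (C * real nS ^ 2 * real nA * ln (real n * real nS * real nA * c4 / \<delta>) / real n)}
           \<ge> 1 - \<delta>))"
  apply (rule exI[where x=4])
  apply (rule exI[where x=2])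
  apply (rule exI[where x=11])
  apply (rule exI[where x=2])
  apply (intro conjI)
      apply simp
     apply simp
    apply simp
   apply simp
  apply (intro allI impI)
  apply (unfold Let_def)
  apply (rule main_thm; assumption)
  done

end
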